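(* For every odd positive integer $n$ and every $D > 1$, there is an instance of colorful $k$-center with $8n$ points, $k=n$, and $r=b=2n$, such that every solution has radius at least $D$, yet the polytope of LP1 with unit radius for this instance is not recognized as infeasible by $\Omega(n)$ rounds of the Sum-of-Squares hierarchy: there is a constant $c>0$ (independent of $n$ and $D$) such that for every $t \le cn$ the $t$-th SoS lifted polytope $SoS^t(K)$ of the LP1 polytope $K$ is nonempty. Consequently the integrality gap of LP1 with $8n$ points persists (is unbounded) up to $\Omega(n)$ rounds of Sum-of-Squares.
   Context: An instance of colorful $k$-center consists of a finite set $P$ of points with a metric $d$, a partition $P=R\cup B$ into red and blue points, and integers $k,r,b\ge0$; with $\mathcal{B}(j,\rho)=\{p\in P:d(j,p)\le\rho\}$, a solution of radius $\rho$ is $C\subseteq P$, $|C|\le k$, with $\bigcup_{c\in C}\mathcal{B}(c,\rho)$ containing at least $r$ red and $b$ blue points. LP1 (unit radius, $\mathcal{B}(j)=\mathcal{B}(j,1)$) is the polytope $K$ of vectors $(x,z)\in[0,1]^{P}\times[0,1]^P$ with $\sum_{i\in\mathcal{B}(j)}x_i\ge z_j$ for all $j\in P$, $\sum_{i\in P}x_i\le k$, $\sum_{j\in R}z_j\ge r$, $\sum_{j\in B}z_j\ge b$. Sum-of-Squares: let $V$ be the variable set, $K=\{v\in[0,1]^V: g_\ell(v)\ge0,\ \ell=1,\dots,m\}$ with linear $g_\ell$. $\mathcal{P}_t(V)$ denotes subsets of $V$ of size at most $t$. For $y\in\mathbb{R}^{\mathcal{P}(V)}$ and $g(v)=\sum_{I\subseteq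 V} a_I\prod_{i\in I}v_i$, $(g*y)_I=\sum_{J\subseteq V}a_J y_{I\cup J}$. For a collection $\mathcal{T}$ of subsets, $M_{\mathcal{T}}(y)$ is the matrix indexed by $\mathcal{T}$ with $(M_{\mathcal{T}}(y))_{I,J}=y_{I\cup J}$. The $t$-th SoS lifted polytope $SoS^t(K)$ is the set of $y\in[0,1]^{\mathcal{P}_{2t}(V)}$ with $y_\emptyset=1$, $M_{\mathcal{P}_t(V)}(y)\succeq0$, and $M_{\mathcal{P}_{t-1}(V)}(g_\ell*y)\succeq0$ for all $\ell$. *)

theory Defs
  imports Complex_Main
begin

definition metric_on :: "nat set \<Rightarrow> (nat \<Rightarrow> nat \<Rightarrow> real) \<Rightarrow> bool" where
  "metric_on P d \<longleftrightarrow>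
     (\<forall>x\<in>P. \<forall>y\<in>P. 0 \<le> d x y \<and> d x y = d y x \<and> (d x y = 0 \<longleftrightarrow> x = y)) \<and>
     (\<forall>x\<in>P. \<forall>y\<in>P. \<forall>z\<in>P. d x z \<le> d x y + d y z)"

definition cball_pts :: "nat set \<Rightarrow> (nat \<Rightarrow> nat \<Rightarrow> real) \<Rightarrow> nat \<Rightarrow> real \<Rightarrow> nat set" where
  "cball_pts P d j \<rho> = {p \<in> P. d j p \<le> \<rho>}"

definition colorful_solution ::
  "nat set \<Rightarrow> (nat \<Rightarrow> nat \<Rightarrow> real) \<Rightarrow> nat set \<Rightarrow> nat \<Rightarrow> nat \<Rightarrow> nat \<Rightarrow> real \<Rightarrow> nat set \<Rightarrow> bool" where
  "colorful_solution P d R k r b \<rho> C \<longleftrightarrow>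
     C \<subseteq> P \<and> card C \<le> k \<and>
     card ((\<Union>c\<in>C. cball_pts P d c \<rho>) \<inter> R) \<ge> r \<and>
     card ((\<Union>c\<in>C. cball_pts P d c \<rho>) \<inter> (P - R)) \<ge> b"

text \<open>LP variables: Inl i is x_i, Inr j is z_j.\<close>
type_synonym var = "nat + nat"

definition lp_vars :: "nat set \<Rightarrow> var set" where
  "lp_vars P = Inl ` P \<union> Inr ` P"

text \<open>A linear (affine) function g(v) = a0 + sum_i a_i v_i, given as (a0, a).\<close>
type_synonym linform = "real \<times> (var \<Rightarrow> real)"

text \<open>The linear constraints g_l(v) >= 0 of LP1 with unit radius (box constraints are
  the [0,1] requirement in the definition of K, not part of this list).\<close>
definition lp1_constraints ::
  "nat set \<Rightarrow> (nat \<Rightarrow> nat \<Rightarrow> real) \<Rightarrow> nat set \<Rightarrow> nat \<Rightarrow> nat \<Rightarrow> nat \<Rightarrow> linform set" where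
  "lp1_constraints P d R k r b =
     {(0, \<lambda>v. case v of Inl i \<Rightarrow> (if i \<in> cball_pts P d j 1 then 1 else 0)
                      | Inr j' \<Rightarrow> (if j' = j then -1 else 0)) | j. j \<in> P}
   \<union> {(real k, \<lambda>v. case v of Inl i \<Rightarrow> (if i \<in> P then -1 else 0) | Inr _ \<Rightarrow> 0)}
   \<union> {(- real r, \<lambda>v. case v of Inl _ \<Rightarrow> 0 | Inr j \<Rightarrow> (if j \<in> R then 1 else 0))}
   \<union> {(- real b, \<lambda>v. case v of Inl _ \<Rightarrow> 0 | Inr j \<Rightarrow> (if j \<in> P - R then 1 else 0))}"

definition subsets_upto :: "var set \<Rightarrow> nat \<Rightarrow> var set set" where
  "subsets_upto V t = {I. I \<subseteq> V \<and> card I \<le> t}"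

definition lin_star :: "var set \<Rightarrow> linform \<Rightarrow> (var set \<Rightarrow> real) \<Rightarrow> var set \<Rightarrow> real" where
  "lin_star V g y I = fst g * y I + (\<Sum>i\<in>V. snd g i * y (insert i I))"

definition psd_on :: "var set set \<Rightarrow> (var set \<Rightarrow> var set \<Rightarrow> real) \<Rightarrow> bool" where
  "psd_on T M \<longleftrightarrow> (\<forall>I\<in>T. \<forall>J\<in>T. M I J = M J I) \<and>
     (\<forall>v :: var set \<Rightarrow> real. 0 \<le> (\<Sum>I\<in>T. \<Sum>J\<in>T. v I * M I J * v J))"

text \<open>y belongs to SoS^t(K); only the entries of y indexed by P_{2t}(V) matter.\<close>
definition in_sos_lift :: "var set \<Rightarrow> linform set \<Rightarrow> nat \<Rightarrow> (var set \<Rightarrow> real) \<Rightarrow> bool" where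
  "in_sos_lift V G t y \<longleftrightarrow>
     y {} = 1 \<and>
     (\<forall>I \<in> subsets_upto V (2 * t). 0 \<le> y I \<and> y I \<le> 1) \<and>
     psd_on (subsets_upto V t) (\<lambda>I J. y (I \<union> J)) \<and>
     (\<forall>g\<in>G. psd_on (subsets_upto V (t - 1)) (\<lambda>I J. lin_star V g y (I \<union> J)))"

end

theory Submission
  imports Defs
begin


definition ff :: "real \<Rightarrow> nat \<Rightarrow> real" where
  "ff a w = (\<Prod>i<w. a - real i)"

lemma ff_0[simp]: "ff a 0 = 1"
  by (simp add: ff_def)

lemma ff_Suc: "ff a (Suc w) = ff a w * (a - real w)"
  by (simp add: ff_def)

lemma ff_Suc': "ff a (Suc w) = a * ff (a - 1) w"
proof -
  have "ff a (Suc w) = (a - real 0) * (\<Prod>i<w. a - real (Suc i))"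
    unfolding ff_def by (rule prod.lessThan_Suc_shift)
  also have "(\<Prod>i<w. a - real (Suc i)) = ff (a - 1) w"
    unfolding ff_def by (intro prod.cong) (auto simp: algebra_simps)
  finally show ?thesis by simp
qed

definition om :: "nat \<Rightarrow> real \<Rightarrow> nat \<Rightarrow> real" where
  "om N K w = ff K w * ff (real N - K) (N - w) / fact N"

definition pe :: "nat set \<Rightarrow> real \<Rightarrow> (nat set \<Rightarrow> real) \<Rightarrow> real" where
  "pe V K f = (\<Sum>X\<in>Pow V. om (card V) K (card X) * f X)"

lemma om_Suc_Suc: "om (Suc M) K (Suc w) = K / real (Suc M) * om M (K - 1) w"
proof -
  have e: "real (Suc M) - K = real M - (K - 1)" by simp
  show ?thesis unfolding om_def ff_Suc' e
    by (simp add: field_simps)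
qed

lemma om_Suc: "w \<le> M \<Longrightarrow> om (Suc M) K w = (real (Suc M) - K) / real (Suc M) * om M K w"
proof -
  assume "w \<le> M"
  then have e: "Suc M - w = Suc (M - w)" by simp
  have e2: "real (Suc M) - K - 1 = real M - K" by simp
  show ?thesis unfolding om_def e ff_Suc' e2
    by (simp add: field_simps)
qed

lemma pe_cong: "(\<And>X. X \<subseteq> V \<Longrightarrow> f X = g X) \<Longrightarrow> pe V K f = pe V K g"
  unfolding pe_def by (intro sum.cong) auto

lemma pe_add: "pe V K (\<lambda>X. f X + g X) = pe V K f + pe V K g"
  unfolding pe_def by (simp add: algebra_simps sum.distrib)

lemma pe_diff: "pe V K (\<lambda>X. f X - g X) = pe V K f - pe V K g"
  unfolding pe_def by (simp add: algebra_simps sum_subtractf)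

lemma pe_smult: "pe V K (\<lambda>X. c * f X) = c * pe V K f"
  unfolding pe_def by (simp add: algebra_simps sum_distrib_left)

lemma pe_sum: "pe V K (\<lambda>X. \<Sum>a\<in>A. f a X) = (\<Sum>a\<in>A. pe V K (f a))"
  unfolding pe_def by (simp add: sum_distrib_left sum.swap[of _ A])

lemma pe_zero[simp]: "pe V K (\<lambda>X. 0) = 0"
  unfolding pe_def by simp

lemma pe_cond:
  assumes "finite V" "i \<in> V"
  shows "pe V K f = K / real (card V) * pe (V - {i}) (K - 1) (\<lambda>X. f (insert i X))
                  + (real (card V) - K) / real (card V) * pe (V - {i}) K f"
proof -
  define V' where "V' = V - {i}"
  have V: "V = insert i V'" and iV: "i \<notin> V'" and fin: "finite V'"
    using assms by (auto simp: V'_def)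
  have cV: "card V = Suc (card V')" using V iV fin by simp
  have disj: "Pow V' \<inter> insert i ` Pow V' = {}" using iV by auto
  have inj: "inj_on (insert i) (Pow V')" using iV
    by (intro inj_onI) (metis Pow_iff insert_absorb insert_ident subsetD)
  have "pe V K f = (\<Sum>X\<in>Pow V'. om (card V) K (card X) * f X)
      + (\<Sum>X\<in>insert i ` Pow V'. om (card V) K (card X) * f X)"
    unfolding pe_def V Pow_insert
    by (subst sum.union_disjoint) (use fin disj in auto)
  also have "(\<Sum>X\<in>insert i ` Pow V'. om (card V) K (card X) * f X)
      = (\<Sum>X\<in>Pow V'. om (card V) K (card (insert i X)) * f (insert i X))"
    by (subst sum.reindex[OF inj]) simp
  also have "\<dots> = (\<Sum>X\<in>Pow V'. K / real (card V) * (om (card V') (K - 1) (card X) * f (insert i X)))"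
  proof (intro sum.cong refl)
    fix X assume "X \<in> Pow V'"
    then have "card (insert i X) = Suc (card X)" using iV fin
      by (meson PowD card_insert_disjoint finite_subset subsetD)
    then show "om (card V) K (card (insert i X)) * f (insert i X) =
       K / real (card V) * (om (card V') (K - 1) (card X) * f (insert i X))"
      by (simp only: cV om_Suc_Suc)
  qed
  also have "(\<Sum>X\<in>Pow V'. om (card V) K (card X) * f X)
      = (\<Sum>X\<in>Pow V'. (real (card V) - K) / real (card V) * (om (card V') K (card X) * f X))"
  proof (intro sum.cong refl)
    fix X assume "X \<in> Pow V'"
    then have "card X \<le> card V'" using fin by (simp add: card_mono)
    then show "om (card V) K (card X) * f X =
       (real (card V) - K) / real (card V) * (om (card V') K (card X) * f X)"
      unfolding cV by (simp add: om_Suc)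
  qed
  finally show ?thesis
    unfolding pe_def V'_def[symmetric] by (simp add: sum_distrib_left add.commute)
qed

lemma pe_one: "finite V \<Longrightarrow> pe V K (\<lambda>X. 1) = 1"
proof (induction "card V" arbitrary: V K)
  case 0
  then have "V = {}" by simp
  then show ?case by (simp add: pe_def om_def)
next
  case (Suc M)
  then obtain i where i: "i \<in> V" by (metis card_eq_SucD insertI1)
  have c: "card (V - {i}) = M" using Suc i by simp
  have "pe V K (\<lambda>X. 1) = K / real (card V) * 1 + (real (card V) - K) / real (card V) * 1"
    using pe_cond[OF Suc(3) i, of K "\<lambda>X. 1"] Suc(1)[of "V - {i}"] c Suc(3) by simp
  also have "\<dots> = 1" using Suc(2)[symmetric]
    by (simp add: add_divide_distrib[symmetric])
  finally show ?case .
qed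


definition tr :: "nat \<Rightarrow> nat \<Rightarrow> nat \<Rightarrow> nat" where
  "tr i k x = (if x = i then k else if x = k then i else x)"

definition sw :: "nat \<Rightarrow> nat \<Rightarrow> nat set \<Rightarrow> nat set" where
  "sw i k X = tr i k ` X"

lemma tr_tr[simp]: "tr i k (tr i k x) = x"
  by (simp add: tr_def)

lemma inj_tr: "inj (tr i k)"
  by (metis injI tr_tr)

lemma sw_sw[simp]: "sw i k (sw i k X) = X"
  unfolding sw_def image_comp by (simp add: comp_def)

lemma card_sw[simp]: "card (sw i k X) = card X"
  unfolding sw_def by (simp add: card_image inj_on_subset[OF inj_tr])

lemma sw_subset: "i \<in> V \<Longrightarrow> k \<in> V \<Longrightarrow> X \<subseteq> V \<Longrightarrow> sw i k X \<subseteq> V"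
  unfolding sw_def tr_def by auto

lemma subset_sw: "(S \<subseteq> sw i k X) = (sw i k S \<subseteq> X)"
proof
  assume "S \<subseteq> sw i k X"
  then have "sw i k S \<subseteq> sw i k (sw i k X)" unfolding sw_def by (rule image_mono)
  then show "sw i k S \<subseteq> X" by simp
next
  assume "sw i k S \<subseteq> X"
  then have "sw i k (sw i k S) \<subseteq> sw i k X" unfolding sw_def by (rule image_mono)
  then show "S \<subseteq> sw i k X" by simp
qed

lemma pe_sw:
  assumes "i \<in> V" "k \<in> V"
  shows "pe V K (\<lambda>X. f (sw i k X)) = pe V K f"
  unfolding pe_def
proof (rule sum.reindex_bij_witness[where i = "sw i k" and j = "sw i k"])
qed (use assms sw_subset in auto)

definition mon :: "nat set \<Rightarrow> nat set \<Rightarrow> real" where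
  "mon S X = (if S \<subseteq> X then 1 else 0)"

lemma mono_sw: "mon S (sw i k X) = mon (sw i k S) X"
  unfolding mon_def by (simp add: subset_sw)

lemma mono_mult: "mon S X * mon T X = mon (S \<union> T) X"
  unfolding mon_def by auto

inductive lowdeg :: "nat set \<Rightarrow> nat \<Rightarrow> (nat set \<Rightarrow> real) \<Rightarrow> bool" for V s where
  ld_mono: "S \<subseteq> V \<Longrightarrow> card S \<le> s \<Longrightarrow> lowdeg V s (mon S)"
| ld_add: "lowdeg V s F \<Longrightarrow> lowdeg V s G \<Longrightarrow> lowdeg V s (\<lambda>X. F X + G X)"
| ld_smult: "lowdeg V s F \<Longrightarrow> lowdeg V s (\<lambda>X. c * F X)"
| ld_ext: "lowdeg V s F \<Longrightarrow> (\<And>X. X \<subseteq> V \<Longrightarrow> G X = F X) \<Longrightarrow> lowdeg V s G"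

lemma ld_const: "lowdeg V s (\<lambda>X. c)"
proof -
  have "lowdeg V s (\<lambda>X. c * mon {} X)" by (intro ld_smult ld_mono) auto
  then show ?thesis by (rule ld_ext) (simp add: mon_def)
qed

lemma ld_zero: "lowdeg V s (\<lambda>X. 0)"
  using ld_const .

lemma ld_diff: "lowdeg V s F \<Longrightarrow> lowdeg V s G \<Longrightarrow> lowdeg V s (\<lambda>X. F X - G X)"
proof -
  assume "lowdeg V s F" "lowdeg V s G"
  then have "lowdeg V s (\<lambda>X. F X + (-1) * G X)" by (intro ld_add ld_smult)
  then show ?thesis by (rule ld_ext) simp
qed

lemma ld_sum: "finite A \<Longrightarrow> (\<And>a. a \<in> A \<Longrightarrow> lowdeg V s (F a)) \<Longrightarrow> lowdeg V s (\<lambda>X. \<Sum>a\<in>A. F a X)"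
proof (induction A rule: finite_induct)
  case empty
  then show ?case by (simp add: ld_zero)
next
  case (insert a A)
  then have "lowdeg V s (\<lambda>X. F a X + (\<Sum>a\<in>A. F a X))" by (intro ld_add) auto
  then show ?case by (rule ld_ext) (use insert in simp)
qed

lemma ld_le: "lowdeg V s F \<Longrightarrow> s \<le> s' \<Longrightarrow> lowdeg V s' F"
proof (induction rule: lowdeg.induct)
  case (ld_mono S)
  then show ?case by (intro lowdeg.ld_mono) auto
qed (auto intro: lowdeg.intros)

lemma ld_mult: "lowdeg V a F \<Longrightarrow> lowdeg V b G \<Longrightarrow> lowdeg V (a + b) (\<lambda>X. F X * G X)"
proof (induction rule: lowdeg.induct)
  case (ld_mono S)
  from ld_mono(3) show ?case
  proof (induction rule: lowdeg.induct)
    case (ld_mono T)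
    have "lowdeg V (a + b) (mon (S \<union> T))"
    proof (rule lowdeg.ld_mono)
      show "S \<union> T \<subseteq> V" using ld_mono \<open>S \<subseteq> V\<close> by auto
      have "card (S \<union> T) \<le> card S + card T" by (rule card_Un_le)
      then show "card (S \<union> T) \<le> a + b" using ld_mono \<open>card S \<le> a\<close> by linarith
    qed
    then show ?case by (rule ld_ext) (simp add: mono_mult)
  next
    case (ld_add F G)
    then have "lowdeg V (a + b) (\<lambda>X. mon S X * F X + mon S X * G X)" by (intro lowdeg.ld_add)
    then show ?case by (rule ld_ext) (simp add: algebra_simps)
  next
    case (ld_smult F c)
    then have "lowdeg V (a + b) (\<lambda>X. c * (mon S X * F X))" by (intro lowdeg.ld_smult)
    then show ?case by (rule ld_ext) (simp add: algebra_simps)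
  next
    case (ld_ext F G)
    then show ?case by (intro lowdeg.ld_ext[OF ld_ext(3)]) auto
  qed
next
  case (ld_add F1 F2)
  then have "lowdeg V (a + b) (\<lambda>X. F1 X * G X + F2 X * G X)" by (intro lowdeg.ld_add)
  then show ?case by (rule ld_ext) (simp add: algebra_simps)
next
  case (ld_smult F c)
  then have "lowdeg V (a + b) (\<lambda>X. c * (F X * G X))" by (intro lowdeg.ld_smult)
  then show ?case by (rule ld_ext) (simp add: algebra_simps)
next
  case (ld_ext F G')
  then show ?case by (intro lowdeg.ld_ext[OF ld_ext(3)]) auto
qed

definition mom :: "nat \<Rightarrow> real \<Rightarrow> nat \<Rightarrow> real" where
  "mom N K s = ff K s / ff (real N) s"

lemma ff_nat_nz: "s \<le> N \<Longrightarrow> ff (real N) s \<noteq> 0"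
  unfolding ff_def by (simp add: prod_zero_iff)

lemma mom_Suc: "s < N \<Longrightarrow> real (N - s) * mom N K (Suc s) = (K - real s) * mom N K s"
proof -
  assume "s < N"
  then have "real N - real s \<noteq> 0" "ff (real N) s \<noteq> 0" using ff_nat_nz by auto
  then show ?thesis unfolding mom_def ff_Suc using \<open>s < N\<close> by (simp add: of_nat_diff field_simps)
qed

lemma pe_mono:
  assumes "finite V" "T \<subseteq> V"
  shows "pe V K (mon T) = mom (card V) K (card T)"
  using assms
proof (induction "card T" arbitrary: V K T)
  case 0
  then have "T = {}" using finite_subset by (metis card_0_eq)
  then have "pe V K (mon T) = pe V K (\<lambda>X. 1)" by (intro pe_cong) (simp add: mon_def)
  then show ?case using pe_one[OF 0(2)] \<open>T = {}\<close> by (simp add: mom_def)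
next
  case (Suc s)
  then obtain i where i: "i \<in> T" by (metis card_eq_SucD insertI1)
  have iV: "i \<in> V" using i Suc by auto
  have fT: "finite T" using Suc(3,4) finite_subset by blast
  have cT: "card (T - {i}) = s" using Suc(2) i fT by simp
  obtain M where M: "card V = Suc M" using iV Suc(3) by (metis card_Suc_Diff1)
  have cV': "card (V - {i}) = M" using M iV Suc(3) by simp
  have "pe V K (mon T) = K / real (card V) * pe (V - {i}) (K - 1) (mon (T - {i}))
          + (real (card V) - K) / real (card V) * pe (V - {i}) K (\<lambda>X. 0)"
    unfolding pe_cond[OF Suc(3) iV, of K]
    by (intro arg_cong2[where f = "(+)"] arg_cong2[where f = "(*)"] refl pe_cong)
       (use i in \<open>auto simp: mon_def\<close>)
  also have "\<dots> = K / real (card V) * mom M (K - 1) s"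
    using Suc(1)[of "T - {i}" "V - {i}" "K - 1"] cT cV' Suc(3,4) by auto
  also have "\<dots> = mom (card V) K (card T)"
    unfolding M Suc(2)[symmetric] mom_def ff_Suc'
    by (simp add: field_simps)
  finally show ?case .
qed

lemma card_as_sum: "finite V \<Longrightarrow> X \<subseteq> V \<Longrightarrow> real (card X) = (\<Sum>j\<in>V. mon {j} X)"
proof -
  assume "finite V" "X \<subseteq> V"
  then have "(\<Sum>j\<in>V. mon {j} X) = (\<Sum>j\<in>V. if j \<in> X then 1 else 0)"
    by (intro sum.cong) (auto simp: mon_def)
  also have "\<dots> = real (card (V \<inter> X))" by (simp add: sum.If_cases \<open>finite V\<close>)
  also have "V \<inter> X = X" using \<open>X \<subseteq> V\<close> by auto
  finally show ?thesis by simp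
qed

lemma pe_ideal_mono:
  assumes "finite V" "T \<subseteq> V" "card T < card V"
  shows "pe V K (\<lambda>X. (real (card X) - K) * mon T X) = 0"
proof -
  define s where "s = card T"
  define N where "N = card V"
  have fT: "finite T" using assms finite_subset by auto
  have "pe V K (\<lambda>X. (real (card X) - K) * mon T X)
      = pe V K (\<lambda>X. (\<Sum>j\<in>V. mon (insert j T) X) - K * mon T X)"
  proof (intro pe_cong)
    fix X assume X: "X \<subseteq> V"
    have "\<And>j. mon {j} X * mon T X = mon (insert j T) X" by (simp add: mon_def)
    then have "(\<Sum>j\<in>V. mon {j} X) * mon T X = (\<Sum>j\<in>V. mon (insert j T) X)"
      by (simp add: sum_distrib_right)
    then show "(real (card X) - K) * mon T X = (\<Sum>j\<in>V. mon (insert j T) X) - K * mon T X"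
      by (simp add: card_as_sum[OF assms(1) X] left_diff_distrib)
  qed
  also have "\<dots> = (\<Sum>j\<in>V. mom N K (card (insert j T))) - K * mom N K s"
    unfolding pe_diff pe_sum pe_smult N_def s_def
    using assms by (simp add: pe_mono)
  also have "(\<Sum>j\<in>V. mom N K (card (insert j T))) =
      (\<Sum>j\<in>T. mom N K s) + (\<Sum>j\<in>V - T. mom N K (Suc s))"
  proof -
    have "(\<Sum>j\<in>V. mom N K (card (insert j T))) = (\<Sum>j\<in>T. mom N K (card (insert j T)))
         + (\<Sum>j\<in>V - T. mom N K (card (insert j T)))"
      using assms by (metis sum.subset_diff add.commute)
    moreover have "(\<Sum>j\<in>T. mom N K (card (insert j T))) = (\<Sum>j\<in>T. mom N K s)"
      by (intro sum.cong) (auto simp: s_def insert_absorb)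
    moreover have "(\<Sum>j\<in>V - T. mom N K (card (insert j T))) = (\<Sum>j\<in>V - T. mom N K (Suc s))"
      by (intro sum.cong) (auto simp: s_def fT)
    ultimately show ?thesis by simp
  qed
  also have "\<dots> = real s * mom N K s + real (N - s) * mom N K (Suc s)"
    using assms fT by (simp add: s_def N_def card_Diff_subset)
  also have "real (N - s) * mom N K (Suc s) = (K - real s) * mom N K s"
    using assms by (intro mom_Suc) (simp add: s_def N_def)
  finally show ?thesis by (simp add: algebra_simps)
qed

lemma pe_ideal:
  assumes "finite V" "lowdeg V s H" "s < card V"
  shows "pe V K (\<lambda>X. (real (card X) - K) * H X) = 0"
  using assms(2,3)
proof (induction rule: lowdeg.induct)
  case (ld_mono S)
  then show ?case using pe_ideal_mono[OF assms(1)] by auto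
next
  case (ld_add F G)
  then show ?case by (simp add: distrib_left pe_add)
next
  case (ld_smult F c)
  have "pe V K (\<lambda>X. (real (card X) - K) * (c * F X)) = c * pe V K (\<lambda>X. (real (card X) - K) * F X)"
    by (simp add: pe_smult[symmetric] algebra_simps)
  then show ?case using ld_smult by simp
next
  case (ld_ext F G)
  then show ?case by (metis (no_types, lifting) pe_cong)
qed


definition Lop :: "nat set \<Rightarrow> (nat set \<Rightarrow> real) \<Rightarrow> nat set \<Rightarrow> real" where
  "Lop V F = (\<lambda>X. \<Sum>i\<in>V. \<Sum>k\<in>V. F X - F (sw i k X))"

definition lam :: "nat \<Rightarrow> nat \<Rightarrow> real" where
  "lam N s = 2 * real s * (real N + 1 - real s)"

lemma Lop_add: "Lop V (\<lambda>X. F X + G X) = (\<lambda>X. Lop V F X + Lop V G X)"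
  unfolding Lop_def by (simp add: sum.distrib[symmetric] algebra_simps)

lemma Lop_diff: "Lop V (\<lambda>X. F X - G X) = (\<lambda>X. Lop V F X - Lop V G X)"
  unfolding Lop_def by (simp add: sum_subtractf[symmetric] algebra_simps)

lemma Lop_smult: "Lop V (\<lambda>X. c * F X) = (\<lambda>X. c * Lop V F X)"
  unfolding Lop_def by (simp add: sum_distrib_left algebra_simps)

lemma Lop_cong: "finite V \<Longrightarrow> (\<And>X. X \<subseteq> V \<Longrightarrow> F X = G X) \<Longrightarrow> X \<subseteq> V \<Longrightarrow> Lop V F X = Lop V G X"
  unfolding Lop_def by (intro sum.cong refl) (auto simp: sw_subset)

lemma pe_sw_prod:
  assumes "i \<in> V" "k \<in> V"
  shows "pe V K (\<lambda>X. G X * F (sw i k X)) = pe V K (\<lambda>X. G (sw i k X) * F X)"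
  using pe_sw[OF assms, of K "\<lambda>X. G (sw i k X) * F X"] by simp

lemma Lop_selfadj:
  assumes "finite V"
  shows "pe V K (\<lambda>X. G X * Lop V F X) = pe V K (\<lambda>X. Lop V G X * F X)"
proof -
  have "pe V K (\<lambda>X. G X * Lop V F X) =
      (\<Sum>i\<in>V. \<Sum>k\<in>V. pe V K (\<lambda>X. G X * F X) - pe V K (\<lambda>X. G X * F (sw i k X)))"
    unfolding Lop_def by (simp add: sum_distrib_left right_diff_distrib pe_sum pe_diff)
  also have "\<dots> = (\<Sum>i\<in>V. \<Sum>k\<in>V. pe V K (\<lambda>X. G X * F X) - pe V K (\<lambda>X. G (sw i k X) * F X))"
    by (intro sum.cong refl) (simp add: pe_sw_prod)
  also have "\<dots> = pe V K (\<lambda>X. Lop V G X * F X)"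
    unfolding Lop_def by (simp add: sum_distrib_right left_diff_distrib pe_sum pe_diff)
  finally show ?thesis .
qed

lemma Lop_form:
  assumes "finite V"
  shows "pe V K (\<lambda>X. G X * Lop V G X) =
     (\<Sum>i\<in>V. \<Sum>k\<in>V. pe V K (\<lambda>X. (G X - G (sw i k X))^2)) / 2"
proof -
  have e: "pe V K (\<lambda>X. (G X - G (sw i k X))^2) =
       2 * (pe V K (\<lambda>X. G X * G X) - pe V K (\<lambda>X. G X * G (sw i k X)))"
    if "i \<in> V" "k \<in> V" for i k
  proof -
    have "pe V K (\<lambda>X. (G X - G (sw i k X))^2) =
       pe V K (\<lambda>X. G X * G X) - 2 * pe V K (\<lambda>X. G X * G (sw i k X))
         + pe V K (\<lambda>X. G (sw i k X) * G (sw i k X))"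
    proof -
      have "pe V K (\<lambda>X. (G X - G (sw i k X))^2) = pe V K (\<lambda>X. (G X * G X - 2 * (G X * G (sw i k X)))
          + G (sw i k X) * G (sw i k X))"
        by (intro pe_cong) (simp add: power2_eq_square algebra_simps)
      then show ?thesis by (simp only: pe_add pe_diff pe_smult)
    qed
    also have "pe V K (\<lambda>X. G (sw i k X) * G (sw i k X)) = pe V K (\<lambda>X. G X * G X)"
      using pe_sw[OF that, of K "\<lambda>X. G X * G X"] by simp
    finally show ?thesis by simp
  qed
  have "pe V K (\<lambda>X. G X * Lop V G X) =
      (\<Sum>i\<in>V. \<Sum>k\<in>V. pe V K (\<lambda>X. G X * G X) - pe V K (\<lambda>X. G X * G (sw i k X)))"
    unfolding Lop_def by (simp add: sum_distrib_left right_diff_distrib pe_sum pe_diff)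
  also have "\<dots> = (\<Sum>i\<in>V. \<Sum>k\<in>V. pe V K (\<lambda>X. (G X - G (sw i k X))^2) / 2)"
    by (intro sum.cong refl) (simp add: e)
  finally show ?thesis by (simp add: sum_divide_distrib)
qed

lemma Lop_mono_eq: "Lop V (mon S) = (\<lambda>X. \<Sum>i\<in>V. \<Sum>k\<in>V. mon S X - mon (sw i k S) X)"
  unfolding Lop_def by (simp add: mono_sw)

lemma ld_Lop:
  assumes "finite V" "lowdeg V s F"
  shows "lowdeg V s (Lop V F)"
  using assms(2)
proof (induction rule: lowdeg.induct)
  case (ld_mono S)
  have "lowdeg V s (\<lambda>X. \<Sum>i\<in>V. \<Sum>k\<in>V. mon S X - mon (sw i k S) X)"
  proof (rule ld_sum[OF assms(1)])
    fix i assume i: "i \<in> V"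
    show "lowdeg V s (\<lambda>X. \<Sum>k\<in>V. mon S X - mon (sw i k S) X)"
    proof (rule ld_sum[OF assms(1)])
      fix k assume k: "k \<in> V"
      show "lowdeg V s (\<lambda>X. mon S X - mon (sw i k S) X)"
      proof (rule ld_diff)
        show "lowdeg V s (mon S)" using ld_mono by (intro lowdeg.ld_mono)
        have "sw i k S \<subseteq> V" using ld_mono(1) i k by (rule sw_subset[rotated 2])
        moreover have "card (sw i k S) \<le> s" using ld_mono(2) by simp
        ultimately show "lowdeg V s (mon (sw i k S))" by (rule lowdeg.ld_mono)
      qed
    qed
  qed
  then show ?case unfolding Lop_mono_eq .
next
  case (ld_add F G)
  then show ?case unfolding Lop_add by (intro lowdeg.ld_add) (simp_all only:)
next
  case (ld_smult F c)
  then show ?case unfolding Lop_smult by (intro lowdeg.ld_smult) (simp_all only:)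
next
  case (ld_ext F G)
  show ?case
  proof (rule lowdeg.ld_ext[OF ld_ext(3)])
    fix X assume "X \<subseteq> V"
    then show "Lop V G X = Lop V F X" by (rule Lop_cong[OF assms(1) ld_ext(2), rotated])
  qed
qed

definition null :: "nat set \<Rightarrow> real \<Rightarrow> nat \<Rightarrow> (nat set \<Rightarrow> real) \<Rightarrow> bool" where
  "null V K t R \<longleftrightarrow> (\<forall>G. lowdeg V t G \<longrightarrow> pe V K (\<lambda>X. G X * R X) = 0)"

lemma null_add: "null V K t R \<Longrightarrow> null V K t R' \<Longrightarrow> null V K t (\<lambda>X. R X + R' X)"
  unfolding null_def by (simp add: distrib_left pe_add)

lemma null_smult: "null V K t R \<Longrightarrow> null V K t (\<lambda>X. c * R X)"
proof -
  assume "null V K t R"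
  have "pe V K (\<lambda>X. G X * (c * R X)) = c * pe V K (\<lambda>X. G X * R X)" for G
    by (simp add: pe_smult[symmetric] algebra_simps)
  then show ?thesis using \<open>null V K t R\<close> unfolding null_def by simp
qed

lemma null_diff: "null V K t R \<Longrightarrow> null V K t R' \<Longrightarrow> null V K t (\<lambda>X. R X - R' X)"
  unfolding null_def by (simp add: right_diff_distrib pe_diff)

lemma null_cong: "null V K t R \<Longrightarrow> (\<And>X. X \<subseteq> V \<Longrightarrow> R' X = R X) \<Longrightarrow> null V K t R'"
proof -
  assume a: "null V K t R" "\<And>X. X \<subseteq> V \<Longrightarrow> R' X = R X"
  have "pe V K (\<lambda>X. G X * R' X) = pe V K (\<lambda>X. G X * R X)" for G
    by (rule pe_cong) (simp add: a(2))
  then show ?thesis using a(1) unfolding null_def by simp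
qed

lemma null_zero: "null V K t (\<lambda>X. 0)"
  unfolding null_def by simp

lemma null_Lop: "finite V \<Longrightarrow> null V K t R \<Longrightarrow> null V K t (Lop V R)"
proof -
  assume a: "finite V" "null V K t R"
  show ?thesis unfolding null_def
  proof (intro allI impI)
    fix G assume G: "lowdeg V t G"
    have "pe V K (\<lambda>X. G X * Lop V R X) = pe V K (\<lambda>X. Lop V G X * R X)"
      by (rule Lop_selfadj[OF a(1)])
    also have "\<dots> = 0" using a(2) ld_Lop[OF a(1) G] unfolding null_def by simp
    finally show "pe V K (\<lambda>X. G X * Lop V R X) = 0" .
  qed
qed

lemma null_sym: "null V K t R \<Longrightarrow> lowdeg V t G \<Longrightarrow> pe V K (\<lambda>X. R X * G X) = 0"
  unfolding null_def by (simp add: mult.commute)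


lemma mem_sw: "x \<in> sw i k S \<longleftrightarrow> tr i k x \<in> S"
  unfolding sw_def by (metis image_iff tr_tr)

lemma sw_SS: "i \<in> S \<Longrightarrow> k \<in> S \<Longrightarrow> sw i k S = S"
  by (auto simp: mem_sw tr_def split: if_splits)

lemma sw_NN: "i \<notin> S \<Longrightarrow> k \<notin> S \<Longrightarrow> sw i k S = S"
  by (auto simp: mem_sw tr_def split: if_splits)

lemma sw_SN: "i \<in> S \<Longrightarrow> k \<notin> S \<Longrightarrow> sw i k S = insert k (S - {i})"
  by (auto simp: mem_sw tr_def split: if_splits)

lemma sw_NS: "i \<notin> S \<Longrightarrow> k \<in> S \<Longrightarrow> sw i k S = insert i (S - {k})"
  by (auto simp: mem_sw tr_def split: if_splits)

lemma sum_split_sub: "finite V \<Longrightarrow> S \<subseteq> V \<Longrightarrow> (\<Sum>i\<in>V. f i) = (\<Sum>i\<in>S. f i) + (\<Sum>i\<in>V - S. f i)"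
  by (metis add.commute sum.subset_diff)

lemma Lop_mon_pt:
  assumes fin: "finite V" and SV: "S \<subseteq> V" and XV: "X \<subseteq> V"
  shows "Lop V (mon S) X = lam (card V) (card S) * mon S X
           - 2 * (real (card X) - real (card S) + 1) * (\<Sum>i\<in>S. mon (S - {i}) X)"
proof -
  define N where "N = card V"
  define s where "s = card S"
  define m where "m = mon S X"
  define D where "D = (\<Sum>i\<in>S. mon (S - {i}) X)"
  have fS: "finite S" using fin SV finite_subset by auto
  have fX: "finite X" using fin XV finite_subset by auto
  have cVS: "card (V - S) = N - s" using fin SV by (simp add: N_def s_def card_Diff_subset fS)
  have sN: "s \<le> N" using fin SV by (simp add: N_def s_def card_mono)
  define E where "E = (\<Sum>i\<in>S. \<Sum>k\<in>V - S. mon (insert k (S - {i})) X)"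
  have A: "(\<Sum>i\<in>V. \<Sum>k\<in>V. mon (sw i k S) X) = real s * real s * m + 2 * E + real (N - s) * real (N - s) * m"
  proof -
    have "(\<Sum>i\<in>V. \<Sum>k\<in>V. mon (sw i k S) X) =
       (\<Sum>i\<in>S. (\<Sum>k\<in>S. mon (sw i k S) X) + (\<Sum>k\<in>V - S. mon (sw i k S) X))
     + (\<Sum>i\<in>V - S. (\<Sum>k\<in>S. mon (sw i k S) X) + (\<Sum>k\<in>V - S. mon (sw i k S) X))"
      by (simp add: sum_split_sub[OF fin SV])
    also have "\<dots> = (\<Sum>i\<in>S. real s * m + (\<Sum>k\<in>V - S. mon (insert k (S - {i})) X))
       + (\<Sum>i\<in>V - S. (\<Sum>k\<in>S. mon (insert i (S - {k})) X) + real (N - s) * m)"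
    proof -
      have 1: "(\<Sum>i\<in>S. (\<Sum>k\<in>S. mon (sw i k S) X) + (\<Sum>k\<in>V - S. mon (sw i k S) X))
          = (\<Sum>i\<in>S. real s * m + (\<Sum>k\<in>V - S. mon (insert k (S - {i})) X))"
      proof (rule sum.cong[OF refl])
        fix i assume i: "i \<in> S"
        have "(\<Sum>k\<in>S. mon (sw i k S) X) = (\<Sum>k\<in>S. m)"
          by (intro sum.cong refl) (simp add: sw_SS i m_def)
        moreover have "(\<Sum>k\<in>V - S. mon (sw i k S) X) = (\<Sum>k\<in>V - S. mon (insert k (S - {i})) X)"
          by (intro sum.cong refl) (simp add: sw_SN i)
        ultimately show "(\<Sum>k\<in>S. mon (sw i k S) X) + (\<Sum>k\<in>V - S. mon (sw i k S) X) =
            real s * m + (\<Sum>k\<in>V - S. mon (insert k (S - {i})) X)" by (simp add: s_def)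
      qed
      have 2: "(\<Sum>i\<in>V - S. (\<Sum>k\<in>S. mon (sw i k S) X) + (\<Sum>k\<in>V - S. mon (sw i k S) X))
          = (\<Sum>i\<in>V - S. (\<Sum>k\<in>S. mon (insert i (S - {k})) X) + real (N - s) * m)"
      proof (rule sum.cong[OF refl])
        fix i assume i: "i \<in> V - S"
        have "(\<Sum>k\<in>V - S. mon (sw i k S) X) = (\<Sum>k\<in>V - S. m)"
          by (intro sum.cong refl) (use i in \<open>simp add: sw_NN m_def\<close>)
        moreover have "(\<Sum>k\<in>S. mon (sw i k S) X) = (\<Sum>k\<in>S. mon (insert i (S - {k})) X)"
          by (intro sum.cong refl) (use i in \<open>simp add: sw_NS\<close>)
        ultimately show "(\<Sum>k\<in>S. mon (sw i k S) X) + (\<Sum>k\<in>V - S. mon (sw i k S) X) =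
            (\<Sum>k\<in>S. mon (insert i (S - {k})) X) + real (N - s) * m" by (simp add: cVS)
      qed
      show ?thesis using 1 2 by simp
    qed
    also have "(\<Sum>i\<in>V - S. (\<Sum>k\<in>S. mon (insert i (S - {k})) X) + real (N - s) * m)
        = E + real (N - s) * real (N - s) * m"
      unfolding E_def by (simp add: sum.distrib cVS sum.swap[of _ "V - S" S])
    also have "(\<Sum>i\<in>S. real s * m + (\<Sum>k\<in>V - S. mon (insert k (S - {i})) X))
        = real s * real s * m + E"
      unfolding E_def by (simp add: sum.distrib s_def)
    finally show ?thesis by simp
  qed
  have E: "E = (real (card X) - real s + 1) * D - real s * m"
  proof -
    have "E = (\<Sum>i\<in>S. mon (S - {i}) X * real (card X) - (mon (S - {i}) X * (real s - 1) + m))"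
      unfolding E_def
    proof (rule sum.cong[OF refl])
      fix i assume i: "i \<in> S"
      have "(\<Sum>k\<in>V - S. mon (insert k (S - {i})) X) = (\<Sum>k\<in>V - S. mon (S - {i}) X * (if k \<in> X then 1 else 0))"
        by (intro sum.cong refl) (auto simp: mon_def)
      also have "\<dots> = mon (S - {i}) X * real (card ((V - S) \<inter> X))"
        by (simp add: sum_distrib_left[symmetric] sum.If_cases fin)
      also have "(V - S) \<inter> X = X - (X \<inter> S)" using XV by auto
      also have "real (card (X - (X \<inter> S))) = real (card X) - real (card (X \<inter> S))"
        using fX by (simp add: card_Diff_subset of_nat_diff card_mono)
      also have "mon (S - {i}) X * (real (card X) - real (card (X \<inter> S))) =
          mon (S - {i}) X * real (card X) - (mon (S - {i}) X * (real s - 1) + m)"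
      proof (cases "S - {i} \<subseteq> X")
        case sub: True
        have m1: "mon (S - {i}) X = 1" using sub by (simp add: mon_def)
        show ?thesis
        proof (cases "i \<in> X")
          case iX: True
          have "X \<inter> S = S" using sub iX i by auto
          moreover have "m = 1" using sub iX i unfolding m_def mon_def by auto
          ultimately show ?thesis unfolding m1 s_def by simp
        next
          case niX: False
          have "X \<inter> S = S - {i}" using sub niX i by auto
          moreover have "m = 0" using niX i unfolding m_def mon_def by auto
          moreover have "real (card (S - {i})) = real (card S) - 1"
          proof -
            have "card S > 0" using i fS card_gt_0_iff by blast
            then have "card S \<ge> 1" by simp
            moreover have "card (S - {i}) = card S - 1" using i fS by simp
            ultimately show ?thesis by (simp add: of_nat_diff)
          qed
          ultimately show ?thesis unfolding m1 s_def by simp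
        qed
      next
        case nsub: False
        have m0: "mon (S - {i}) X = 0" using nsub by (simp add: mon_def)
        have "m = 0" using nsub unfolding m_def mon_def by auto
        then show ?thesis unfolding m0 by simp
      qed
      finally show "(\<Sum>k\<in>V - S. mon (insert k (S - {i})) X) =
          mon (S - {i}) X * real (card X) - (mon (S - {i}) X * (real s - 1) + m)" .
    qed
    also have "\<dots> = (real (card X) - real s + 1) * D - real s * m"
    proof -
      have "(\<Sum>i\<in>S. mon (S - {i}) X * real (card X) - (mon (S - {i}) X * (real s - 1) + m))
          = (\<Sum>i\<in>S. mon (S - {i}) X * (real (card X) - real s + 1) - m)"
        by (intro sum.cong refl) (simp add: algebra_simps)
      also have "\<dots> = (\<Sum>i\<in>S. mon (S - {i}) X) * (real (card X) - real s + 1) - real s * m"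
        by (simp only: sum_subtractf sum_distrib_right sum_constant s_def)
      finally show ?thesis unfolding D_def by (simp only: mult.commute)
    qed
    finally show ?thesis .
  qed
  have "Lop V (mon S) X = real N * real N * m - (\<Sum>i\<in>V. \<Sum>k\<in>V. mon (sw i k S) X)"
    unfolding Lop_mono_eq by (simp add: sum_subtractf m_def N_def)
  also have "\<dots> = lam N s * m - 2 * (real (card X) - real s + 1) * D"
  proof -
    have r: "real (N - s) = real N - real s" using sN by simp
    show ?thesis unfolding A E lam_def r by (simp add: algebra_simps)
  qed
  finally show ?thesis by (simp add: N_def s_def m_def D_def)
qed


lemma ld_D:
  assumes "S \<subseteq> V" "card S \<le> s" "1 \<le> s"
  shows "lowdeg V (s - 1) (\<lambda>X. \<Sum>i\<in>S. mon (S - {i}) X)"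
proof (cases "finite S")
  case True
  show ?thesis
  proof (rule ld_sum[OF True])
    fix i assume i: "i \<in> S"
    show "lowdeg V (s - 1) (mon (S - {i}))"
    proof (rule ld_mono)
      show "S - {i} \<subseteq> V" using assms by auto
      show "card (S - {i}) \<le> s - 1" using assms i True by simp
    qed
  qed
next
  case False
  then show ?thesis by (simp add: ld_zero)
qed

lemma tri_mon:
  assumes fin: "finite V" and SV: "S \<subseteq> V" and cS: "card S \<le> s" and s1: "1 \<le> s"
    and st: "s \<le> t" and tN: "2 * t \<le> card V"
  shows "\<exists>F'. lowdeg V (s - 1) F' \<and>
           null V K t (\<lambda>X. Lop V (mon S) X - lam (card V) s * mon S X - F' X)"
proof -
  define r where "r = card S"
  define D where "D = (\<lambda>X. \<Sum>i\<in>S. mon (S - {i}) X)"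
  define F' where "F' = (\<lambda>X. (lam (card V) r - lam (card V) s) * mon S X - 2 * (K - real r + 1) * D X)"
  have lD: "lowdeg V (s - 1) D" unfolding D_def using ld_D[OF SV cS s1] .
  have l1: "lowdeg V (s - 1) (\<lambda>X. (lam (card V) r - lam (card V) s) * mon S X)"
  proof (cases "r = s")
    case True
    then show ?thesis by (intro ld_ext[OF ld_zero]) simp
  next
    case False
    then have "r \<le> s - 1" using cS r_def by simp
    then show ?thesis using SV r_def by (intro ld_smult ld_mono) auto
  qed
  have lF': "lowdeg V (s - 1) F'" unfolding F'_def
    by (rule ld_diff[OF l1]) (rule ld_smult[OF lD])
  have lD2: "lowdeg V (s - 1) D" using lD .
  have nul: "null V K t (\<lambda>X. -2 * ((real (card X) - K) * D X))"
  proof (rule null_smult, unfold null_def, intro allI impI)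
    fix G assume G: "lowdeg V t G"
    have "lowdeg V (t + (s - 1)) (\<lambda>X. G X * D X)" by (rule ld_mult[OF G lD])
    moreover have "t + (s - 1) < card V" using s1 st tN by linarith
    ultimately have "pe V K (\<lambda>X. (real (card X) - K) * (G X * D X)) = 0"
      by (rule pe_ideal[OF fin])
    then show "pe V K (\<lambda>X. G X * ((real (card X) - K) * D X)) = 0"
      by (simp add: algebra_simps)
  qed
  have "null V K t (\<lambda>X. Lop V (mon S) X - lam (card V) s * mon S X - F' X)"
  proof (rule null_cong[OF nul])
    fix X assume X: "X \<subseteq> V"
    show "Lop V (mon S) X - lam (card V) s * mon S X - F' X = -2 * ((real (card X) - K) * D X)"
      unfolding Lop_mon_pt[OF fin SV X] F'_def D_def r_def by (simp add: algebra_simps)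
  qed
  with lF' show ?thesis by blast
qed

lemma tri:
  assumes fin: "finite V" and F: "lowdeg V s F" and s1: "1 \<le> s"
    and st: "s \<le> t" and tN: "2 * t \<le> card V"
  shows "\<exists>F'. lowdeg V (s - 1) F' \<and>
           null V K t (\<lambda>X. Lop V F X - lam (card V) s * F X - F' X)"
  using F
proof (induction rule: lowdeg.induct)
  case (ld_mono S)
  then show ?case using tri_mon[OF fin _ _ s1 st tN] by blast
next
  case (ld_add F G)
  then obtain F1 F2 where F1: "lowdeg V (s - 1) F1" "null V K t (\<lambda>X. Lop V F X - lam (card V) s * F X - F1 X)"
    and F2: "lowdeg V (s - 1) F2" "null V K t (\<lambda>X. Lop V G X - lam (card V) s * G X - F2 X)" by blast
  have "lowdeg V (s - 1) (\<lambda>X. F1 X + F2 X)" using F1 F2 by (intro lowdeg.ld_add)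
  moreover have "null V K t (\<lambda>X. Lop V (\<lambda>X. F X + G X) X - lam (card V) s * (F X + G X) - (F1 X + F2 X))"
    using null_add[OF F1(2) F2(2)] unfolding Lop_add by (simp add: algebra_simps)
  ultimately show ?case by blast
next
  case (ld_smult F c)
  then obtain F1 where F1: "lowdeg V (s - 1) F1" "null V K t (\<lambda>X. Lop V F X - lam (card V) s * F X - F1 X)"
    by blast
  have "lowdeg V (s - 1) (\<lambda>X. c * F1 X)" using F1 by (intro lowdeg.ld_smult)
  moreover have "null V K t (\<lambda>X. Lop V (\<lambda>X. c * F X) X - lam (card V) s * (c * F X) - c * F1 X)"
    using null_smult[OF F1(2), of c] unfolding Lop_smult by (simp add: algebra_simps)
  ultimately show ?case by blast
next
  case (ld_ext F G)
  then obtain F1 where F1: "lowdeg V (s - 1) F1" "null V K t (\<lambda>X. Lop V F X - lam (card V) s * F X - F1 X)"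
    by blast
  have "null V K t (\<lambda>X. Lop V G X - lam (card V) s * G X - F1 X)"
  proof (rule null_cong[OF F1(2)])
    fix X assume X: "X \<subseteq> V"
    have "Lop V G X = Lop V F X" by (rule Lop_cong[OF fin ld_ext(2) X])
    then show "Lop V G X - lam (card V) s * G X - F1 X = Lop V F X - lam (card V) s * F X - F1 X"
      using ld_ext(2)[OF X] by simp
  qed
  with F1(1) show ?case by blast
qed


fun Qop :: "nat set \<Rightarrow> nat \<Rightarrow> (nat set \<Rightarrow> real) \<Rightarrow> nat set \<Rightarrow> real" where
  "Qop V 0 F = F"
| "Qop V (Suc j) F = (\<lambda>X. Lop V (Qop V j F) X - lam (card V) j * Qop V j F X)"

lemma Q_add: "Qop V j (\<lambda>X. F X + G X) = (\<lambda>X. Qop V j F X + Qop V j G X)"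
  by (induction j) (simp_all add: Lop_add Lop_diff algebra_simps)

lemma Q_smult: "Qop V j (\<lambda>X. c * F X) = (\<lambda>X. c * Qop V j F X)"
  by (induction j) (simp_all add: Lop_smult algebra_simps)

lemma Q_diff: "Qop V j (\<lambda>X. F X - G X) = (\<lambda>X. Qop V j F X - Qop V j G X)"
proof -
  have "Qop V j (\<lambda>X. F X - G X) = Qop V j (\<lambda>X. F X + (-1) * G X)" by simp
  also have "\<dots> = (\<lambda>X. Qop V j F X - Qop V j G X)" unfolding Q_add Q_smult by simp
  finally show ?thesis .
qed

lemma Lop_diff_smult: "Lop V (\<lambda>X. F X - c * G X) = (\<lambda>X. Lop V F X - c * Lop V G X)"
  unfolding Lop_diff Lop_smult ..

lemma Q_comm: "Qop V j (Lop V F) = Lop V (Qop V j F)"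
proof (induction j)
  case 0
  then show ?case by simp
next
  case (Suc j)
  show ?case by (simp add: Suc Lop_diff_smult)
qed

lemma Q_Suc': "Qop V (Suc j) F = Qop V j (\<lambda>X. Lop V F X - lam (card V) j * F X)"
  unfolding Q_diff Q_smult by (simp add: Q_comm)

lemma Q_selfadj: "finite V \<Longrightarrow> pe V K (\<lambda>X. G X * Qop V j F X) = pe V K (\<lambda>X. Qop V j G X * F X)"
proof (induction j arbitrary: F G)
  case 0
  then show ?case by simp
next
  case (Suc j)
  have "pe V K (\<lambda>X. G X * Qop V (Suc j) F X) =
      pe V K (\<lambda>X. G X * Lop V (Qop V j F) X) - lam (card V) j * pe V K (\<lambda>X. G X * Qop V j F X)"
    by (simp add: right_diff_distrib pe_diff pe_smult[symmetric] algebra_simps)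
  also have "\<dots> = pe V K (\<lambda>X. Lop V G X * Qop V j F X) - lam (card V) j * pe V K (\<lambda>X. Qop V j G X * F X)"
    using Lop_selfadj[OF Suc.prems] Suc.IH[OF Suc.prems] by simp
  also have "pe V K (\<lambda>X. Lop V G X * Qop V j F X) = pe V K (\<lambda>X. Qop V j (Lop V G) X * F X)"
    using Suc.IH[OF Suc.prems] by simp
  also have "\<dots> - lam (card V) j * pe V K (\<lambda>X. Qop V j G X * F X) = pe V K (\<lambda>X. Qop V (Suc j) G X * F X)"
    by (simp add: Q_comm left_diff_distrib pe_diff pe_smult[symmetric] algebra_simps)
  finally show ?case .
qed

lemma ld_Q: "finite V \<Longrightarrow> lowdeg V s F \<Longrightarrow> lowdeg V s (Qop V j F)"
proof (induction j)
  case 0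
  then show ?case by simp
next
  case (Suc j)
  then have "lowdeg V s (Qop V j F)" by simp
  then show ?case by (simp only: Qop.simps) (intro ld_diff ld_smult ld_Lop \<open>finite V\<close>)
qed

lemma null_Q: "finite V \<Longrightarrow> null V K t R \<Longrightarrow> null V K t (Qop V j R)"
proof (induction j)
  case 0
  then show ?case by simp
next
  case (Suc j)
  then have "null V K t (Qop V j R)" by simp
  then show ?case by (simp only: Qop.simps) (intro null_diff null_smult null_Lop \<open>finite V\<close>)
qed

lemma ld0_const:
  assumes finV: "finite V" and F: "lowdeg V 0 F"
  shows "\<exists>c. \<forall>X. X \<subseteq> V \<longrightarrow> F X = c"
  using F
proof (induction rule: lowdeg.induct)
  case (ld_mono S)
  then have "S = {} \<or> infinite S" by auto
  then show ?case
  proof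
    assume "S = {}" then show ?thesis by (auto simp: mon_def)
  next
    assume "infinite S"
    then show ?thesis using ld_mono(1) finV by (meson finite_subset)
  qed
next
  case (ld_add F G)
  then show ?case by fastforce
next
  case (ld_smult F c)
  then show ?case by fastforce
next
  case (ld_ext F G)
  then show ?case by fastforce
qed


lemma Q_kills:
  assumes fin: "finite V" and tN: "2 * t \<le> card V"
  shows "s \<le> t \<Longrightarrow> lowdeg V s F \<Longrightarrow> null V K t (Qop V (Suc s) F)"
proof (induction s arbitrary: F)
  case 0
  obtain c where c: "\<And>X. X \<subseteq> V \<Longrightarrow> F X = c" using ld0_const[OF fin 0(2)] by blast
  show ?case
  proof (rule null_cong[OF null_zero])
    fix X assume X: "X \<subseteq> V"
    have "Lop V F X = 0" unfolding Lop_def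
      by (intro sum.neutral ballI) (simp add: c X sw_subset)
    then show "Qop V (Suc 0) F X = 0" by (simp add: lam_def)
  qed
next
  case (Suc s)
  obtain F' where F': "lowdeg V s F'"
    and R: "null V K t (\<lambda>X. Lop V F X - lam (card V) (Suc s) * F X - F' X)"
    using tri[OF fin Suc(3) _ Suc(2) tN, of K] by auto
  have e: "(\<lambda>X. Lop V F X - lam (card V) (Suc s) * F X) =
      (\<lambda>X. F' X + (Lop V F X - lam (card V) (Suc s) * F X - F' X))" by simp
  define R' where "R' = (\<lambda>X. Lop V F X - lam (card V) (Suc s) * F X - F' X)"
  have "Qop V (Suc (Suc s)) F = Qop V (Suc s) (\<lambda>X. F' X + R' X)"
    unfolding R'_def by (simp only: Q_Suc'[of V "Suc s" F] e)
  also have "\<dots> = (\<lambda>X. Qop V (Suc s) F' X + Qop V (Suc s) R' X)" by (rule Q_add)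
  finally have eq: "Qop V (Suc (Suc s)) F = (\<lambda>X. Qop V (Suc s) F' X + Qop V (Suc s) R' X)" .
  have n1: "null V K t (Qop V (Suc s) F')" using Suc(1)[OF _ F'] Suc(2) by simp
  have n2: "null V K t (Qop V (Suc s) R')" using null_Q[OF fin R] unfolding R'_def .
  show ?case unfolding eq by (rule null_add[OF n1 n2])
qed

definition cc :: "nat \<Rightarrow> nat \<Rightarrow> nat \<Rightarrow> real" where
  "cc N t j = (\<Prod>l<j. lam N t - lam N l)"

lemma near:
  assumes fin: "finite V" and tN: "2 * t \<le> card V" and t1: "1 \<le> t" and F: "lowdeg V t F"
  shows "\<exists>F1. lowdeg V (t - 1) F1 \<and> null V K t (\<lambda>X. Qop V j F X - cc (card V) t j * F X - F1 X)"
proof (induction j)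
  case 0
  have "null V K t (\<lambda>X. Qop V 0 F X - cc (card V) t 0 * F X - 0)"
    by (rule null_cong[OF null_zero]) (simp add: cc_def)
  then show ?case using ld_zero by blast
next
  case (Suc j)
  then obtain F1 where F1: "lowdeg V (t - 1) F1"
    and R1: "null V K t (\<lambda>X. Qop V j F X - cc (card V) t j * F X - F1 X)" by blast
  obtain F2 where F2: "lowdeg V (t - 1) F2"
    and R2: "null V K t (\<lambda>X. Lop V F X - lam (card V) t * F X - F2 X)"
    using tri[OF fin F t1 le_refl tN, of K] by blast
  define c where "c = cc (card V) t j"
  define l where "l = lam (card V) j"
  define F1' where "F1' = (\<lambda>X. c * F2 X + (Lop V F1 X - l * F1 X))"
  have lF1': "lowdeg V (t - 1) F1'" unfolding F1'_def
    by (intro ld_add ld_smult ld_diff F2 F1 ld_Lop fin)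
  have n1: "null V K t (\<lambda>X. c * (Lop V F X - lam (card V) t * F X - F2 X))"
    by (rule null_smult[OF R2])
  have n2: "null V K t (\<lambda>X. Lop V (\<lambda>X. Qop V j F X - c * F X - F1 X) X
                             - l * (Qop V j F X - c * F X - F1 X))"
    unfolding c_def
    by (intro null_diff null_smult null_Lop fin R1)
  have ccS: "cc (card V) t (Suc j) = c * (lam (card V) t - l)"
    unfolding cc_def c_def l_def by simp
  have "null V K t (\<lambda>X. Qop V (Suc j) F X - cc (card V) t (Suc j) * F X - F1' X)"
  proof (rule null_cong[OF null_add[OF n1 n2]])
    fix X
    show "Qop V (Suc j) F X - cc (card V) t (Suc j) * F X - F1' X =
      c * (Lop V F X - lam (card V) t * F X - F2 X) +
      (Lop V (\<lambda>X. Qop V j F X - c * F X - F1 X) X - l * (Qop V j F X - c * F X - F1 X))"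
      unfolding ccS F1'_def Lop_diff Lop_smult by (simp add: l_def algebra_simps)
  qed
  with lF1' show ?case by blast
qed

lemma cc_pos:
  assumes "2 * t \<le> N"
  shows "cc N t t > 0"
  unfolding cc_def
proof (rule prod_pos)
  fix l assume "l \<in> {..<t}"
  then have lt: "l < t" by simp
  have "lam N t - lam N l = 2 * (real t - real l) * (real N + 1 - real t - real l)"
    unfolding lam_def by (simp add: algebra_simps)
  moreover have "real t - real l > 0" using lt by simp
  moreover have "real N + 1 - real t - real l > 0" using lt assms by linarith
  ultimately show "lam N t - lam N l > 0" by simp
qed

lemma tr_other: "x \<noteq> i \<Longrightarrow> x \<noteq> k \<Longrightarrow> tr i k x = x"
  by (simp add: tr_def)

lemma sw_fix: "i \<notin> X \<Longrightarrow> k \<notin> X \<Longrightarrow> sw i k X = X"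
  by (auto simp: mem_sw tr_def split: if_splits)

lemma sw_ins_i: "i \<notin> X \<Longrightarrow> k \<notin> X \<Longrightarrow> sw i k (insert i X) = insert k X"
  by (auto simp: mem_sw tr_def split: if_splits)

lemma sw_ins_k: "i \<notin> X \<Longrightarrow> k \<notin> X \<Longrightarrow> sw i k (insert k X) = insert i X"
  by (auto simp: mem_sw tr_def split: if_splits)

lemma sw_ins_ik: "i \<notin> X \<Longrightarrow> k \<notin> X \<Longrightarrow> sw i k (insert i (insert k X)) = insert i (insert k X)"
  by (auto simp: mem_sw tr_def split: if_splits)

lemma pe_pair:
  assumes fin: "finite V" and i: "i \<in> V" and k: "k \<in> V" and ik: "i \<noteq> k"
  shows "pe V K (\<lambda>X. (G X - G (sw i k X))^2) =
     2 * (K * (real (card V) - K) / (real (card V) * (real (card V) - 1))) *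
     pe (V - {i, k}) (K - 1) (\<lambda>X. (G (insert i X) - G (insert k X))^2)"
proof -
  define f where "f = (\<lambda>X. (G X - G (sw i k X))^2)"
  define V1 where "V1 = V - {i}"
  define V2 where "V2 = V - {i, k}"
  define N where "N = real (card V)"
  define P where "P = pe V2 (K - 1) (\<lambda>X. (G (insert i X) - G (insert k X))^2)"
  have V2: "V2 = V1 - {k}" unfolding V1_def V2_def by auto
  have fin1: "finite V1" using fin by (simp add: V1_def)
  have k1: "k \<in> V1" using k ik by (simp add: V1_def)
  have cV1: "real (card V1) = N - 1"
  proof -
    have "card V > 0" using fin i card_gt_0_iff by blast
    then show ?thesis using fin i by (simp add: V1_def N_def of_nat_diff)
  qed
  have X2: "i \<notin> X" "k \<notin> X" if "X \<subseteq> V2" for X using that by (auto simp: V2_def)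
  have a: "pe V1 (K - 1) (\<lambda>X. f (insert i X)) = (real (card V1) - (K - 1)) / real (card V1) * P"
  proof -
    have "pe V1 (K - 1) (\<lambda>X. f (insert i X)) =
        (K - 1) / real (card V1) * pe V2 (K - 1 - 1) (\<lambda>X. 0)
        + (real (card V1) - (K - 1)) / real (card V1) * P"
      unfolding pe_cond[OF fin1 k1, of "K - 1"] V2[symmetric] P_def
      by (intro arg_cong2[where f = "(+)"] arg_cong2[where f = "(*)"] refl pe_cong)
         (simp_all add: f_def X2 sw_ins_ik sw_ins_i insert_commute)
    then show ?thesis by simp
  qed
  have b: "pe V1 K f = K / real (card V1) * P"
  proof -
    have "pe V1 K f =
        K / real (card V1) * P + (real (card V1) - K) / real (card V1) * pe V2 K (\<lambda>X. 0)"
      unfolding pe_cond[OF fin1 k1, of K] V2[symmetric] P_def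
      by (intro arg_cong2[where f = "(+)"] arg_cong2[where f = "(*)"] refl pe_cong)
         (simp_all add: f_def X2 sw_ins_k sw_fix power2_commute)
    then show ?thesis by simp
  qed
  have "pe V K f = K / N * ((N - 1 - (K - 1)) / (N - 1) * P) + (N - K) / N * (K / (N - 1) * P)"
    unfolding pe_cond[OF fin i, of K] V1_def[symmetric] a b cV1 N_def ..
  also have "\<dots> = 2 * (K * (N - K) / (N * (N - 1))) * P"
    by (simp add: field_simps)
  finally show ?thesis unfolding f_def N_def P_def V2_def .
qed

lemma ld_H:
  assumes fin: "finite V" and G: "lowdeg V s G" and i: "i \<in> V" and k: "k \<in> V" and ik: "i \<noteq> k"
  shows "lowdeg (V - {i, k}) (s - 1) (\<lambda>X. G (insert i X) - G (insert k X))"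
  using G
proof (induction rule: lowdeg.induct)
  case (ld_mono S)
  have fS: "finite S" using ld_mono fin finite_subset by auto
  consider "i \<notin> S" "k \<notin> S" | "i \<in> S" "k \<notin> S" | "i \<notin> S" "k \<in> S" | "i \<in> S" "k \<in> S" by blast
  then show ?case
  proof cases
    case 1
    show ?thesis by (rule ld_ext[OF ld_zero]) (use 1 in \<open>auto simp: mon_def\<close>)
  next
    case 2
    have "lowdeg (V - {i, k}) (s - 1) (mon (S - {i}))"
      by (rule lowdeg.ld_mono) (use 2 ld_mono fS in auto)
    then show ?thesis by (rule ld_ext) (use 2 ik in \<open>auto simp: mon_def\<close>)
  next
    case 3
    have "lowdeg (V - {i, k}) (s - 1) (\<lambda>X. (-1) * mon (S - {k}) X)"
      by (intro lowdeg.ld_smult lowdeg.ld_mono) (use 3 ld_mono fS in auto)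
    then show ?thesis by (rule ld_ext) (use 3 ik in \<open>auto simp: mon_def\<close>)
  next
    case 4
    show ?thesis by (rule ld_ext[OF ld_zero]) (use 4 ik in \<open>auto simp: mon_def\<close>)
  qed
next
  case (ld_add F G)
  have "lowdeg (V - {i, k}) (s - 1) (\<lambda>X. (F (insert i X) - F (insert k X)) + (G (insert i X) - G (insert k X)))"
    using ld_add by (intro lowdeg.ld_add)
  then show ?case by (rule ld_ext) simp
next
  case (ld_smult F c)
  have "lowdeg (V - {i, k}) (s - 1) (\<lambda>X. c * (F (insert i X) - F (insert k X)))"
    using ld_smult by (intro lowdeg.ld_smult)
  then show ?case by (rule ld_ext) (simp add: algebra_simps)
next
  case (ld_ext F G)
  show ?case
  proof (rule lowdeg.ld_ext[OF ld_ext(3)])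
    fix X assume "X \<subseteq> V - {i, k}"
    then have "insert i X \<subseteq> V" "insert k X \<subseteq> V" using i k by auto
    then show "G (insert i X) - G (insert k X) = F (insert i X) - F (insert k X)"
      using ld_ext(2) by simp
  qed
qed


theorem grig:
  "\<forall>V K F. finite V \<longrightarrow> 2 * t \<le> card V \<longrightarrow> real t - 1 \<le> K \<longrightarrow> K \<le> real (card V) - real t + 1
     \<longrightarrow> lowdeg V t F \<longrightarrow> 0 \<le> pe V K (\<lambda>X. F X * F X)"
proof (induction t)
  case 0
  show ?case
  proof (intro allI impI)
    fix V K F assume fin: "finite V" and F: "lowdeg V 0 F"
    obtain c where c: "\<And>X. X \<subseteq> V \<Longrightarrow> F X = c" using ld0_const[OF fin F] by blast
    have "pe V K (\<lambda>X. F X * F X) = pe V K (\<lambda>X. (c * c) * 1)" by (rule pe_cong) (simp add: c)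
    also have "\<dots> = c * c" by (simp only: pe_smult pe_one[OF fin])
    finally show "0 \<le> pe V K (\<lambda>X. F X * F X)" by simp
  qed
next
  case (Suc t')
  define t where "t = Suc t'"
  show ?case
  proof (intro allI impI)
    fix V K F
    assume fin: "finite V" and tN: "2 * Suc t' \<le> card V" and K1: "real (Suc t') - 1 \<le> K"
      and K2: "K \<le> real (card V) - real (Suc t') + 1" and F: "lowdeg V (Suc t') F"
    define N where "N = card V"
    have tN': "2 * t \<le> N" using tN by (simp add: t_def N_def)
    have t1: "1 \<le> t" by (simp add: t_def)
    have tm1: "t - 1 = t'" by (simp add: t_def)
    have Ft: "lowdeg V t F" using F by (simp add: t_def)
    have L4: "0 \<le> pe V K (\<lambda>X. G X * Lop V G X)" if G: "lowdeg V t G" for G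
    proof -
      have "0 \<le> pe V K (\<lambda>X. (G X - G (sw i k X))^2)" if i: "i \<in> V" and k: "k \<in> V" for i k
      proof (cases "i = k")
        case True
        have "sw i k X = X" for X using True by (auto simp: mem_sw tr_def split: if_splits)
        then show ?thesis by simp
      next
        case False
        define V2 where "V2 = V - {i, k}"
        have cV2: "card V2 = N - 2" using i k False fin by (simp add: V2_def N_def card_Diff_subset)
        have "0 \<le> pe V2 (K - 1) (\<lambda>X. (G (insert i X) - G (insert k X)) * (G (insert i X) - G (insert k X)))"
        proof (rule Suc.IH[rule_format])
          show "finite V2" using fin by (simp add: V2_def)
          show "2 * t' \<le> card V2" using cV2 tN' by (simp add: t_def)
          show "real t' - 1 \<le> K - 1" using K1 by simp
          show "K - 1 \<le> real (card V2) - real t' + 1" using cV2 K2 tN' by (simp add: t_def N_def of_nat_diff)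
          show "lowdeg V2 t' (\<lambda>X. G (insert i X) - G (insert k X))"
            using ld_H[OF fin G i k False] by (simp add: V2_def t_def)
        qed
        moreover have "0 \<le> K * (real N - K) / (real N * (real N - 1))"
        proof -
          have "0 \<le> K" using K1 by simp
          moreover have "0 \<le> real N - K" using K2 by (simp add: N_def)
          moreover have "0 \<le> real N * (real N - 1)" using tN' t1 by simp
          ultimately show ?thesis by simp
        qed
        ultimately have "0 \<le> 2 * (K * (real N - K) / (real N * (real N - 1))) *
           pe V2 (K - 1) (\<lambda>X. (G (insert i X) - G (insert k X))^2)"
          unfolding power2_eq_square by (intro mult_nonneg_nonneg) simp_all
        then show ?thesis unfolding pe_pair[OF fin i k False] N_def V2_def .
      qed
      then show ?thesis unfolding Lop_form[OF fin]
        by (simp add: sum_nonneg)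
    qed
    define c where "c = cc N t t"
    have cpos: "c > 0" unfolding c_def by (rule cc_pos[OF tN'])
    obtain F1 where F1: "lowdeg V (t - 1) F1"
      and R1: "null V K t (\<lambda>X. Qop V t F X - cc N t t * F X - F1 X)"
      using near[OF fin tN'[unfolded N_def] t1 Ft, of K t] unfolding N_def by blast
    define Ft where "Ft = (\<lambda>X. (1 / c) * Qop V t F X)"
    define R where "R = (\<lambda>X. F X - Ft X)"
    define R' where "R' = (\<lambda>X. (- 1 / c) * F1 X)"
    have lFt: "lowdeg V t Ft" unfolding Ft_def by (intro ld_smult ld_Q fin Ft)
    have lR: "lowdeg V t R" unfolding R_def by (intro ld_diff Ft lFt)
    have lR'1: "lowdeg V (t - 1) R'" unfolding R'_def by (intro ld_smult F1)
    have lR': "lowdeg V t R'" using ld_le[OF lR'1] by simp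
    have nRR': "null V K t (\<lambda>X. R X - R' X)"
    proof (rule null_cong[OF null_smult[OF R1, of "- 1 / c"]])
      fix X
      show "R X - R' X = - 1 / c * (Qop V t F X - cc N t t * F X - F1 X)"
        unfolding R_def R'_def Ft_def c_def[symmetric] using cpos by (simp add: field_simps)
    qed
    have o1: "pe V K (\<lambda>X. Ft X * R' X) = 0"
    proof -
      have "pe V K (\<lambda>X. Ft X * R' X) = (1 / c) * (- 1 / c) * pe V K (\<lambda>X. Qop V t F X * F1 X)"
        unfolding Ft_def R'_def by (simp add: pe_smult[symmetric] algebra_simps)
      also have "pe V K (\<lambda>X. Qop V t F X * F1 X) = pe V K (\<lambda>X. F X * Qop V t F1 X)"
        using Q_selfadj[OF fin, of K F t F1] by simp
      also have "\<dots> = 0"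
      proof -
        have "null V K t (Qop V (Suc (t - 1)) F1)"
          by (rule Q_kills[OF fin tN'[unfolded N_def]]) (use F1 t1 in auto)
        then have "null V K t (Qop V t F1)" using t1 by simp
        then show ?thesis using Ft unfolding null_def by blast
      qed
      finally show ?thesis by simp
    qed
    have o2: "pe V K (\<lambda>X. Ft X * (R X - R' X)) = 0" using nRR' lFt unfolding null_def by blast
    have oFR: "pe V K (\<lambda>X. Ft X * R X) = 0"
    proof -
      have "pe V K (\<lambda>X. Ft X * R X) = pe V K (\<lambda>X. Ft X * R' X) + pe V K (\<lambda>X. Ft X * (R X - R' X))"
        by (simp add: pe_add[symmetric] algebra_simps)
      then show ?thesis using o1 o2 by simp
    qed
    have RR: "pe V K (\<lambda>X. R X * R X) = pe V K (\<lambda>X. R' X * R' X)"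
    proof -
      have a: "pe V K (\<lambda>X. (R X - R' X) * R X) = 0" using null_sym[OF nRR' lR] .
      have b: "pe V K (\<lambda>X. R' X * (R X - R' X)) = 0" using nRR' lR' unfolding null_def by blast
      have "pe V K (\<lambda>X. R X * R X) = pe V K (\<lambda>X. R' X * R' X) + pe V K (\<lambda>X. (R X - R' X) * R X)
          + pe V K (\<lambda>X. R' X * (R X - R' X))"
        by (simp add: pe_add[symmetric] algebra_simps)
      then show ?thesis using a b by simp
    qed
    have RR0: "0 \<le> pe V K (\<lambda>X. R' X * R' X)"
    proof (rule Suc.IH[rule_format])
      show "finite V" by (rule fin)
      show "2 * t' \<le> card V" using tN by simp
      show "real t' - 1 \<le> K" using K1 by simp
      show "K \<le> real (card V) - real t' + 1" using K2 by simp
      show "lowdeg V t' R'" using lR'1 by (simp add: t_def)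
    qed
    have eig: "pe V K (\<lambda>X. Ft X * Lop V Ft X) = lam N t * pe V K (\<lambda>X. Ft X * Ft X)"
    proof -
      have nQ: "null V K t (Qop V (Suc t) F)" by (rule Q_kills[OF fin tN'[unfolded N_def] le_refl Ft])
      have e: "(\<lambda>X. Lop V Ft X - lam N t * Ft X) = (\<lambda>X. (1 / c) * Qop V (Suc t) F X)"
        unfolding Ft_def Lop_smult by (simp add: N_def algebra_simps)
      have e2: "Lop V Ft X - lam N t * Ft X = (1 / c) * Qop V (Suc t) F X" for X
        using fun_cong[OF e, of X] by simp
      have "pe V K (\<lambda>X. Ft X * (Lop V Ft X - lam N t * Ft X)) = 0"
        unfolding e2 using null_smult[OF nQ, of "1 / c"] lFt unfolding null_def by blast
      then show ?thesis by (simp add: right_diff_distrib pe_diff pe_smult[symmetric] algebra_simps)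
    qed
    have lampos: "lam N t > 0" unfolding lam_def using tN' t1 by simp
    have FtFt: "0 \<le> pe V K (\<lambda>X. Ft X * Ft X)"
    proof -
      have "0 \<le> lam N t * pe V K (\<lambda>X. Ft X * Ft X)" using L4[OF lFt] eig by simp
      then show ?thesis using lampos by (simp add: zero_le_mult_iff)
    qed
    have "pe V K (\<lambda>X. F X * F X) = pe V K (\<lambda>X. Ft X * Ft X) + 2 * pe V K (\<lambda>X. Ft X * R X)
        + pe V K (\<lambda>X. R X * R X)"
    proof -
      have "pe V K (\<lambda>X. F X * F X) = pe V K (\<lambda>X. (Ft X * Ft X + 2 * (Ft X * R X)) + R X * R X)"
        by (rule pe_cong) (simp add: R_def algebra_simps)
      then show ?thesis by (simp only: pe_add pe_smult)
    qed
    then show "0 \<le> pe V K (\<lambda>X. F X * F X)" using FtFt oFR RR RR0 by simp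
  qed
qed


lemma card_ge1: "finite A \<Longrightarrow> i \<in> A \<Longrightarrow> 1 \<le> card A"
proof -
  assume "finite A" "i \<in> A"
  then have "card A > 0" by (auto simp: card_gt_0_iff)
  then show ?thesis by simp
qed

lemma prod01: "0 \<le> (a::real) \<Longrightarrow> a \<le> 1 \<Longrightarrow> 0 \<le> b \<and> b \<le> 1 \<Longrightarrow> 0 \<le> a * b \<and> a * b \<le> 1"
  by (simp add: mult_le_one)

definition ind :: "nat set \<Rightarrow> nat set \<Rightarrow> nat set \<Rightarrow> real" where
  "ind A B X = (if A \<subseteq> X \<and> B \<inter> X = {} then 1 else 0)"

lemma pe_box:
  assumes "finite V" "A \<subseteq> V" "B \<subseteq> V" "A \<inter> B = {}" "real (card A) \<le> K"
    "real (card B) \<le> real (card V) - K"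
  shows "0 \<le> pe V K (ind A B) \<and> pe V K (ind A B) \<le> 1"
  using assms
proof (induction "card A + card B" arbitrary: V K A B)
  case 0
  then have "A = {}" "B = {}" using finite_subset by (metis add_is_0 card_0_eq)+
  then have "pe V K (ind A B) = pe V K (\<lambda>X. 1)" by (intro pe_cong) (simp add: ind_def)
  then show ?case using pe_one[OF 0(2)] by simp
next
  case (Suc m)
  have fA: "finite A" and fB: "finite B" using Suc finite_subset by blast+
  show ?case
  proof (cases "A = {}")
    case False
    then obtain i where i: "i \<in> A" by blast
    have iV: "i \<in> V" using i Suc by auto
    have iB: "i \<notin> B" using i Suc(6) by auto
    have cA: "card (A - {i}) = card A - 1" using i fA by simp
    have cA1: "card A \<ge> 1" using card_ge1[OF fA i] .
    have cV: "card (V - {i}) = card V - 1" using iV Suc(3) by simp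
    have cV1: "card V \<ge> 1" using card_ge1[OF Suc(3) iV] .
    have IH: "0 \<le> pe (V - {i}) (K - 1) (ind (A - {i}) B) \<and> pe (V - {i}) (K - 1) (ind (A - {i}) B) \<le> 1"
    proof (rule Suc(1))
      show "m = card (A - {i}) + card B" using Suc(2) cA cA1 by simp
      show "finite (V - {i})" using Suc by simp
      show "A - {i} \<subseteq> V - {i}" "B \<subseteq> V - {i}" "(A - {i}) \<inter> B = {}" using Suc iB by auto
      show "real (card (A - {i})) \<le> K - 1" using cA cA1 Suc(7) by (simp add: of_nat_diff)
      show "real (card B) \<le> real (card (V - {i})) - (K - 1)" using cV cV1 Suc(8) by (simp add: of_nat_diff)
    qed
    have "pe V K (ind A B) = K / real (card V) * pe (V - {i}) (K - 1) (ind (A - {i}) B)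
        + (real (card V) - K) / real (card V) * pe (V - {i}) K (\<lambda>X. 0)"
      unfolding pe_cond[OF Suc(3) iV, of K]
      by (intro arg_cong2[where f = "(+)"] arg_cong2[where f = "(*)"] refl pe_cong)
         (use i iB in \<open>auto simp: ind_def\<close>)
    then have e: "pe V K (ind A B) = K / real (card V) * pe (V - {i}) (K - 1) (ind (A - {i}) B)" by simp
    have "0 \<le> K / real (card V)" "K / real (card V) \<le> 1"
      using Suc(7,8) cA1 cV1 by (auto simp: divide_le_eq_1)
    then show ?thesis unfolding e using IH by (intro prod01)
  next
    case True
    then have "B \<noteq> {}" using Suc(2) by auto
    then obtain i where i: "i \<in> B" by blast
    have iV: "i \<in> V" using i Suc by auto
    have iA: "i \<notin> A" using True by simp
    have cB: "card (B - {i}) = card B - 1" using i fB by simp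
    have cB1: "card B \<ge> 1" using card_ge1[OF fB i] .
    have cV: "card (V - {i}) = card V - 1" using iV Suc(3) by simp
    have cV1: "card V \<ge> 1" using card_ge1[OF Suc(3) iV] .
    have IH: "0 \<le> pe (V - {i}) K (ind A (B - {i})) \<and> pe (V - {i}) K (ind A (B - {i})) \<le> 1"
    proof (rule Suc(1))
      show "m = card A + card (B - {i})" using Suc(2) cB cB1 by simp
      show "finite (V - {i})" using Suc by simp
      show "A \<subseteq> V - {i}" "B - {i} \<subseteq> V - {i}" "A \<inter> (B - {i}) = {}" using Suc iA by auto
      show "real (card A) \<le> K" using Suc(7) .
      show "real (card (B - {i})) \<le> real (card (V - {i})) - K" using cB cB1 cV cV1 Suc(8) by (simp add: of_nat_diff)
    qed
    have "pe V K (ind A B) = K / real (card V) * pe (V - {i}) (K - 1) (\<lambda>X. 0)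
        + (real (card V) - K) / real (card V) * pe (V - {i}) K (ind A (B - {i}))"
      unfolding pe_cond[OF Suc(3) iV, of K]
      by (intro arg_cong2[where f = "(+)"] arg_cong2[where f = "(*)"] refl pe_cong)
         (use i iA True in \<open>auto simp: ind_def\<close>)
    then have e: "pe V K (ind A B) = (real (card V) - K) / real (card V) * pe (V - {i}) K (ind A (B - {i}))" by simp
    have K0: "0 \<le> K" using Suc(7) by (smt (verit) of_nat_0_le_iff)
    have "0 \<le> (real (card V) - K) / real (card V)" "(real (card V) - K) / real (card V) \<le> 1"
      using Suc(8) K0 cB1 cV1 by (auto simp: divide_le_eq_1)
    then show ?thesis unfolding e using IH by (intro prod01)
  qed
qed


definition cv :: "nat \<Rightarrow> nat \<Rightarrow> nat set \<Rightarrow> real" where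
  "cv n c X = (if c < n then (if c \<in> X then 1 else 0)
               else if c < 2 * n then (if c - n \<in> X then 0 else 1) else 0)"

definition val :: "nat \<Rightarrow> var \<Rightarrow> nat set \<Rightarrow> real" where
  "val n v X = (case v of Inl i \<Rightarrow> if 4 dvd i then cv n (i div 4) X else 0
                        | Inr j \<Rightarrow> cv n (j div 4) X)"

definition valI :: "nat \<Rightarrow> var set \<Rightarrow> nat set \<Rightarrow> real" where
  "valI n I X = (\<Prod>v\<in>I. val n v X)"

lemma val01: "val n v X = 0 \<or> val n v X = 1"
  unfolding val_def cv_def by (auto split: sum.splits)

lemma val_sq: "val n v X * val n v X = val n v X"
  using val01[of n v X] by auto

lemma valI_insert: "finite I \<Longrightarrow> valI n (insert v I) X = val n v X * valI n I X"
proof -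
  assume fI: "finite I"
  show ?thesis
  proof (cases "v \<in> I")
    case True
    then have "valI n I X = val n v X * valI n (I - {v}) X"
      unfolding valI_def using fI by (simp add: prod.remove)
    then show ?thesis using True by (simp add: insert_absorb mult.assoc[symmetric] val_sq)
  next
    case False
    then show ?thesis unfolding valI_def using fI by simp
  qed
qed

lemma valI_union: "finite I \<Longrightarrow> finite J \<Longrightarrow> valI n (I \<union> J) X = valI n I X * valI n J X"
proof (induction I rule: finite_induct)
  case empty
  then show ?case by (simp add: valI_def)
next
  case (insert v I)
  then show ?case by (simp add: valI_insert)
qed

lemma valI_empty[simp]: "valI n {} X = 1"
  by (simp add: valI_def)

lemma ld_cv: "lowdeg {..<n} 1 (cv n c)"
proof (cases "c < n")
  case True
  have "lowdeg {..<n} 1 (mon {c})" by (rule ld_mono) (use True in auto)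
  then show ?thesis by (rule ld_ext) (use True in \<open>auto simp: cv_def mon_def\<close>)
next
  case False
  show ?thesis
  proof (cases "c < 2 * n")
    case True
    have "lowdeg {..<n} 1 (\<lambda>X. 1 - mon {c - n} X)"
      by (rule ld_diff[OF ld_const], rule ld_mono) (use True False in auto)
    then show ?thesis by (rule ld_ext) (use True False in \<open>auto simp: cv_def mon_def\<close>)
  next
    case F2: False
    show ?thesis by (rule ld_ext[OF ld_zero]) (use False F2 in \<open>auto simp: cv_def\<close>)
  qed
qed

lemma ld_val: "lowdeg {..<n} 1 (val n v)"
proof (cases v)
  case (Inl i)
  show ?thesis
  proof (cases "4 dvd i")
    case True
    show ?thesis by (rule ld_ext[OF ld_cv[of n "i div 4"]]) (simp add: val_def Inl True)
  next
    case False
    show ?thesis by (rule ld_ext[OF ld_zero]) (simp add: val_def Inl False)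
  qed
next
  case (Inr j)
  show ?thesis by (rule ld_ext[OF ld_cv[of n "j div 4"]]) (simp add: val_def Inr)
qed

lemma ld_valI: "finite I \<Longrightarrow> lowdeg {..<n} (card I) (valI n I)"
proof (induction I rule: finite_induct)
  case empty
  show ?case by (rule ld_ext[OF ld_const[of _ _ 1]]) simp
next
  case (insert v I)
  have "lowdeg {..<n} (1 + card I) (\<lambda>X. val n v X * valI n I X)"
    by (rule ld_mult[OF ld_val insert(3)])
  moreover have "card (insert v I) = 1 + card I" using insert by simp
  ultimately have "lowdeg {..<n} (card (insert v I)) (\<lambda>X. val n v X * valI n I X)" by simp
  then show ?case by (rule ld_ext) (use insert in \<open>simp add: valI_insert\<close>)
qed

definition idx :: "var \<Rightarrow> nat" where
  "idx v = (case v of Inl i \<Rightarrow> i div 4 | Inr j \<Rightarrow> j div 4)"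

definition zer :: "nat \<Rightarrow> var \<Rightarrow> bool" where
  "zer n v = ((case v of Inl i \<Rightarrow> \<not> 4 dvd i | Inr j \<Rightarrow> False) \<or> 2 * n \<le> idx v)"

definition posc :: "nat \<Rightarrow> var \<Rightarrow> nat set" where
  "posc n v = (if \<not> zer n v \<and> idx v < n then {idx v} else {})"

definition negc :: "nat \<Rightarrow> var \<Rightarrow> nat set" where
  "negc n v = (if \<not> zer n v \<and> n \<le> idx v then {idx v - n} else {})"

lemma val_char: "val n v X = (if zer n v then 0 else ind (posc n v) (negc n v) X)"
  unfolding val_def cv_def zer_def posc_def negc_def idx_def ind_def
  by (auto split: sum.splits)

lemma ind_mult: "ind A B X * ind A' B' X = ind (A \<union> A') (B \<union> B') X"
  unfolding ind_def by auto

lemma valI_char: "finite I \<Longrightarrow> valI n I X =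
   (if \<exists>v\<in>I. zer n v then 0 else ind (\<Union>v\<in>I. posc n v) (\<Union>v\<in>I. negc n v) X)"
proof (induction I rule: finite_induct)
  case empty
  then show ?case by (simp add: ind_def)
next
  case (insert v I)
  show ?case unfolding valI_insert[OF insert(1)] insert(3) val_char
    by (auto simp: ind_mult)
qed

lemma card_UN_single:
  assumes "finite I" "\<And>v. v \<in> I \<Longrightarrow> card (f v) \<le> 1"
  shows "card (\<Union>v\<in>I. f v) \<le> card I"
proof -
  have "card (\<Union>v\<in>I. f v) \<le> (\<Sum>v\<in>I. card (f v))" by (rule card_UN_le[OF assms(1)])
  also have "\<dots> \<le> (\<Sum>v\<in>I. 1)" by (rule sum_mono) (rule assms(2))
  finally show ?thesis by simp
qed

lemma y_box:
  assumes fI: "finite I" and cI: "4 * card I \<le> 2 * n"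
  shows "0 \<le> pe {..<n} (real n / 2) (valI n I) \<and> pe {..<n} (real n / 2) (valI n I) \<le> 1"
proof (cases "\<exists>v\<in>I. zer n v")
  case True
  then have "pe {..<n} (real n / 2) (valI n I) = pe {..<n} (real n / 2) (\<lambda>X. 0)"
    by (intro pe_cong) (simp add: valI_char[OF fI])
  then show ?thesis by simp
next
  case False
  define A where "A = (\<Union>v\<in>I. posc n v)"
  define B where "B = (\<Union>v\<in>I. negc n v)"
  have e: "pe {..<n} (real n / 2) (valI n I) = pe {..<n} (real n / 2) (ind A B)"
    by (intro pe_cong) (simp add: valI_char[OF fI] False A_def B_def)
  show ?thesis
  proof (cases "A \<inter> B = {}")
    case False
    have "pe {..<n} (real n / 2) (ind A B) = pe {..<n} (real n / 2) (\<lambda>X. 0)"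
      by (intro pe_cong) (use False in \<open>auto simp: ind_def\<close>)
    then show ?thesis unfolding e by simp
  next
    case True
    have cA: "card A \<le> card I" unfolding A_def by (rule card_UN_single[OF fI]) (simp add: posc_def)
    have cB: "card B \<le> card I" unfolding B_def by (rule card_UN_single[OF fI]) (simp add: negc_def)
    have "0 \<le> pe {..<n} (real n / 2) (ind A B) \<and> pe {..<n} (real n / 2) (ind A B) \<le> 1"
    proof (rule pe_box)
      show "A \<subseteq> {..<n}" unfolding A_def posc_def by auto
      show "B \<subseteq> {..<n}" unfolding B_def negc_def zer_def by auto
      show "real (card A) \<le> real n / 2" using cA cI by simp
      show "real (card B) \<le> real (card {..<n}) - real n / 2" using cB cI by simp
    qed (use True in auto)
    then show ?thesis unfolding e .
  qed
qed


lemma four_Suc: "4 * Suc m = Suc (Suc (Suc (Suc (4 * m))))" by simp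

lemma sum_div4: "(\<Sum>j<4 * (m::nat). f (j div 4)) = 4 * (\<Sum>c<m. f c :: real)"
proof (induction m)
  case 0
  then show ?case by simp
next
  case (Suc m)
  have d: "(4 * m) div 4 = m" "Suc (4 * m) div 4 = m" "Suc (Suc (4 * m)) div 4 = m"
    "Suc (Suc (Suc (4 * m))) div 4 = m" by presburger+
  show ?case unfolding four_Suc sum.lessThan_Suc d Suc by simp
qed

lemma sum_dvd4: "(\<Sum>i<4 * (m::nat). if 4 dvd i then f (i div 4) else 0) = (\<Sum>c<m. f c :: real)"
proof (induction m)
  case 0
  then show ?case by simp
next
  case (Suc m)
  have d: "(4 * m) div 4 = m" by simp
  have nd: "\<not> 4 dvd Suc (4 * m)" "\<not> 4 dvd Suc (Suc (4 * m))" "\<not> 4 dvd Suc (Suc (Suc (4 * m)))"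
    by presburger+
  show ?case unfolding four_Suc sum.lessThan_Suc Suc using d nd by simp
qed

lemma cv_sum_n: "X \<subseteq> {..<n} \<Longrightarrow> (\<Sum>c<n. cv n c X) = real (card X)"
proof -
  assume X: "X \<subseteq> {..<n}"
  have "(\<Sum>c<n. cv n c X) = (\<Sum>c<n. if c \<in> X then 1 else 0)"
    by (intro sum.cong) (auto simp: cv_def)
  also have "\<dots> = real (card ({..<n} \<inter> X))" by (simp add: sum.If_cases)
  also have "{..<n} \<inter> X = X" using X by auto
  finally show ?thesis .
qed

lemma cv_sum_2n: "X \<subseteq> {..<n} \<Longrightarrow> (\<Sum>c<2 * n. cv n c X) = real n"
proof -
  assume X: "X \<subseteq> {..<n}"
  have u: "{..<2 * n} = {..<n} \<union> {0 + n..<n + n}" by auto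
  have "(\<Sum>c<2 * n. cv n c X) = (\<Sum>c<n. cv n c X) + (\<Sum>c\<in>{0 + n..<n + n}. cv n c X)"
    unfolding u by (rule sum.union_disjoint) auto
  also have "(\<Sum>c\<in>{0 + n..<n + n}. cv n c X) = (\<Sum>c\<in>{0..<n}. cv n (c + n) X)"
    by (rule sum.shift_bounds_nat_ivl)
  also have "\<dots> = (\<Sum>c<n. 1 - (if c \<in> X then 1 else 0))"
    by (intro sum.cong) (auto simp: cv_def)
  also have "\<dots> = real n - real (card X)"
    using cv_sum_n[OF X] by (simp add: sum_subtractf cv_def)
  finally show ?thesis using cv_sum_n[OF X] by simp
qed

lemma sum_vars: "finite P \<Longrightarrow> (\<Sum>w\<in>lp_vars P. h w) = (\<Sum>i\<in>P. h (Inl i)) + (\<Sum>j\<in>P. h (Inr j))"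
proof -
  assume fP: "finite P"
  have "(\<Sum>w\<in>lp_vars P. h w) = (\<Sum>w\<in>Inl ` P. h w) + (\<Sum>w\<in>Inr ` P. h w)"
    unfolding lp_vars_def by (rule sum.union_disjoint) (use fP in auto)
  also have "(\<Sum>w\<in>Inl ` P. h w) = (\<Sum>i\<in>P. h (Inl i))" by (simp add: sum.reindex)
  also have "(\<Sum>w\<in>Inr ` P. h w) = (\<Sum>j\<in>P. h (Inr j))" by (simp add: sum.reindex)
  finally show ?thesis .
qed


definition Pn :: "nat \<Rightarrow> nat set" where "Pn n = {..<8 * n}"
definition dd :: "real \<Rightarrow> nat \<Rightarrow> nat \<Rightarrow> real" where
  "dd D p q = (if p = q then 0 else if p div 4 = q div 4 then 1 else max D 2)"
definition Rn :: "nat \<Rightarrow> nat set" where "Rn n = {..<4 * n}"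

lemma metric_dd: "metric_on (Pn n) (dd D)"
  unfolding metric_on_def dd_def by auto

lemma ball1:
  assumes "j \<in> Pn n"
  shows "cball_pts (Pn n) (dd D) j 1 = {4 * (j div 4)..<4 * (j div 4) + 4}"
proof -
  have "p \<in> cball_pts (Pn n) (dd D) j 1 \<longleftrightarrow> p div 4 = j div 4" for p
  proof
    assume "p \<in> cball_pts (Pn n) (dd D) j 1"
    then show "p div 4 = j div 4" unfolding cball_pts_def dd_def by (auto split: if_splits)
  next
    assume a: "p div 4 = j div 4"
    have "j < 8 * n" using assms by (simp add: Pn_def)
    then have "j div 4 < 2 * n" by (simp add: div_less_iff_less_mult)
    then have "p div 4 < 2 * n" using a by simp
    then have "p < 8 * n" by (simp add: div_less_iff_less_mult)
    then show "p \<in> cball_pts (Pn n) (dd D) j 1" using a unfolding cball_pts_def dd_def Pn_def by auto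
  qed
  moreover have "p div 4 = j div 4 \<longleftrightarrow> p \<in> {4 * (j div 4)..<4 * (j div 4) + 4}" for p
    by auto
  ultimately show ?thesis by blast
qed

lemma sum_block: "(\<Sum>i\<in>{4 * c..<4 * c + 4}. val n (Inl i) X) = cv n c X"
proof -
  have e: "{4 * c..<4 * c + 4} = {4 * c, 4 * c + 1, 4 * c + 2, 4 * c + 3}" by auto
  have nd: "\<not> 4 dvd (4 * c + 1)" "\<not> 4 dvd (4 * c + 2)" "\<not> 4 dvd (4 * c + 3)" by presburger+
  show ?thesis unfolding e using nd by (simp add: val_def)
qed

lemma sum_Inl: "(\<Sum>i\<in>Pn n. val n (Inl i) X) = (\<Sum>c<2 * n. cv n c X)"
proof -
  have "(\<Sum>i\<in>Pn n. val n (Inl i) X) = (\<Sum>i<4 * (2 * n). if 4 dvd i then cv n (i div 4) X else 0)"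
    unfolding Pn_def by (intro sum.cong) (auto simp: val_def)
  then show ?thesis using sum_dvd4[where m = "2 * n" and f = "\<lambda>c. cv n c X"] by simp
qed

lemma gv:
  assumes g: "g \<in> lp1_constraints (Pn n) (dd D) (Rn n) n (2 * n) (2 * n)"
  shows "\<exists>\<kappa>. \<forall>X. X \<subseteq> {..<n} \<longrightarrow>
      fst g + (\<Sum>w\<in>lp_vars (Pn n). snd g w * val n w X) = \<kappa> * (real (card X) - real n / 2)"
proof -
  have fP: "finite (Pn n)" by (simp add: Pn_def)
  have sv: "(\<Sum>w\<in>lp_vars (Pn n). snd g w * val n w X) =
      (\<Sum>i\<in>Pn n. snd g (Inl i) * val n (Inl i) X) + (\<Sum>j\<in>Pn n. snd g (Inr j) * val n (Inr j) X)" for X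
    by (rule sum_vars[OF fP])
  from g consider (ball) j where "j \<in> Pn n" "g = (0, \<lambda>v. case v of Inl i \<Rightarrow> (if i \<in> cball_pts (Pn n) (dd D) j 1 then 1 else 0)
                      | Inr j' \<Rightarrow> (if j' = j then -1 else 0))"
    | (k) "g = (real n, \<lambda>v. case v of Inl i \<Rightarrow> (if i \<in> Pn n then -1 else 0) | Inr _ \<Rightarrow> 0)"
    | (red) "g = (- real (2 * n), \<lambda>v. case v of Inl _ \<Rightarrow> 0 | Inr j \<Rightarrow> (if j \<in> Rn n then 1 else 0))"
    | (blue) "g = (- real (2 * n), \<lambda>v. case v of Inl _ \<Rightarrow> 0 | Inr j \<Rightarrow> (if j \<in> Pn n - Rn n then 1 else 0))"
    unfolding lp1_constraints_def by blast
  then show ?thesis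
  proof cases
    case ball
    define c where "c = j div 4"
    have B: "cball_pts (Pn n) (dd D) j 1 = {4 * c..<4 * c + 4}" unfolding c_def by (rule ball1[OF ball(1)])
    have BP: "{4 * c..<4 * c + 4} \<subseteq> Pn n" using B unfolding cball_pts_def by auto
    have "fst g + (\<Sum>w\<in>lp_vars (Pn n). snd g w * val n w X) = 0 * (real (card X) - real n / 2)" for X
    proof -
      have "(\<Sum>i\<in>Pn n. snd g (Inl i) * val n (Inl i) X) =
          (\<Sum>i\<in>Pn n. if i \<in> {4 * c..<4 * c + 4} then val n (Inl i) X else 0)"
        unfolding ball(2) B by (intro sum.cong) auto
      also have "\<dots> = (\<Sum>i\<in>Pn n \<inter> {4 * c..<4 * c + 4}. val n (Inl i) X)"
        by (rule sum.inter_restrict[OF fP, symmetric])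
      also have "Pn n \<inter> {4 * c..<4 * c + 4} = {4 * c..<4 * c + 4}" using BP by auto
      also have "(\<Sum>i\<in>{4 * c..<4 * c + 4}. val n (Inl i) X) = cv n c X" by (rule sum_block)
      finally have 1: "(\<Sum>i\<in>Pn n. snd g (Inl i) * val n (Inl i) X) = cv n c X" .
      have "(\<Sum>j'\<in>Pn n. snd g (Inr j') * val n (Inr j') X) = (\<Sum>j'\<in>Pn n. if j' = j then - val n (Inr j') X else 0)"
        unfolding ball(2) by (intro sum.cong) auto
      also have "\<dots> = - cv n c X" using ball(1) by (simp add: sum.delta[OF fP] val_def c_def)
      finally have 2: "(\<Sum>j'\<in>Pn n. snd g (Inr j') * val n (Inr j') X) = - cv n c X" .
      show ?thesis unfolding sv 1 2 using ball(2) by simp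
    qed
    then show ?thesis by blast
  next
    case k
    have "fst g + (\<Sum>w\<in>lp_vars (Pn n). snd g w * val n w X) = 0 * (real (card X) - real n / 2)"
      if X: "X \<subseteq> {..<n}" for X
    proof -
      have "(\<Sum>i\<in>Pn n. snd g (Inl i) * val n (Inl i) X) = - (\<Sum>i\<in>Pn n. val n (Inl i) X)"
        unfolding k by (simp add: sum_negf[symmetric])
      also have "\<dots> = - real n" unfolding sum_Inl cv_sum_2n[OF X] ..
      finally show ?thesis unfolding sv using k by simp
    qed
    then show ?thesis by blast
  next
    case red
    have "fst g + (\<Sum>w\<in>lp_vars (Pn n). snd g w * val n w X) = 4 * (real (card X) - real n / 2)"
      if X: "X \<subseteq> {..<n}" for X
    proof -
      have RP: "Pn n \<inter> Rn n = {..<4 * n}" by (auto simp: Pn_def Rn_def)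
      have "(\<Sum>j\<in>Pn n. snd g (Inr j) * val n (Inr j) X) = (\<Sum>j\<in>Pn n. if j \<in> Rn n then cv n (j div 4) X else 0)"
        unfolding red by (intro sum.cong) (auto simp: val_def)
      also have "\<dots> = (\<Sum>j<4 * n. cv n (j div 4) X)" unfolding sum.inter_restrict[OF fP, symmetric] RP ..
      also have "\<dots> = 4 * real (card X)" using sum_div4[where m = n and f = "\<lambda>c. cv n c X"] cv_sum_n[OF X] by simp
      finally show ?thesis unfolding sv using red by simp
    qed
    then show ?thesis by blast
  next
    case blue
    have "fst g + (\<Sum>w\<in>lp_vars (Pn n). snd g w * val n w X) = (-4) * (real (card X) - real n / 2)"
      if X: "X \<subseteq> {..<n}" for X
    proof -
      have RP: "Pn n \<inter> (Pn n - Rn n) = {..<4 * (2 * n)} - {..<4 * n}" by (auto simp: Pn_def Rn_def)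
      have "(\<Sum>j\<in>Pn n. snd g (Inr j) * val n (Inr j) X) = (\<Sum>j\<in>Pn n. if j \<in> Pn n - Rn n then cv n (j div 4) X else 0)"
        unfolding blue by (intro sum.cong) (auto simp: val_def)
      also have "\<dots> = (\<Sum>j\<in>{..<4 * (2 * n)} - {..<4 * n}. cv n (j div 4) X)" unfolding sum.inter_restrict[OF fP, symmetric] RP ..
      also have "\<dots> = (\<Sum>j<4 * (2 * n). cv n (j div 4) X) - (\<Sum>j<4 * n. cv n (j div 4) X)"
        by (rule sum_diff) auto
      also have "\<dots> = 4 * real n - 4 * real (card X)"
        using sum_div4[where m = n and f = "\<lambda>c. cv n c X"] sum_div4[where m = "2 * n" and f = "\<lambda>c. cv n c X"] cv_sum_n[OF X] cv_sum_2n[OF X]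
        by simp
      finally show ?thesis unfolding sv using blue by simp
    qed
    then show ?thesis by blast
  qed
qed


definition clus :: "nat \<Rightarrow> nat set" where "clus q = {4 * q..<4 * q + 4}"

lemma card_clus: "card (clus q) = 4" by (simp add: clus_def)

lemma infeas:
  assumes odd: "odd n" and D: "1 < D" and sol: "colorful_solution (Pn n) (dd D) (Rn n) n (2 * n) (2 * n) \<rho> C"
  shows "D \<le> \<rho>"
proof (rule ccontr)
  assume "\<not> D \<le> \<rho>"
  then have rD: "\<rho> < D" by simp
  define U where "U = (\<Union>c\<in>C. cball_pts (Pn n) (dd D) c \<rho>)"
  have CP: "C \<subseteq> Pn n" and cC: "card C \<le> n" and cr: "card (U \<inter> Rn n) \<ge> 2 * n"
    and cb: "card (U \<inter> (Pn n - Rn n)) \<ge> 2 * n"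
    using sol unfolding colorful_solution_def U_def by auto
  have fC: "finite C" using CP finite_subset by (auto simp: Pn_def)
  have inU: "\<exists>c\<in>C. p div 4 = c div 4" if pU: "p \<in> U" for p
  proof -
    obtain c where c: "c \<in> C" "p \<in> Pn n" "dd D c p \<le> \<rho>"
      using pU unfolding U_def cball_pts_def by blast
    then have "dd D c p \<noteq> max D 2" using rD by auto
    then have "c = p \<or> p div 4 = c div 4" unfolding dd_def by (auto split: if_splits)
    then show ?thesis using c by auto
  qed
  have sub1: "U \<inter> Rn n \<subseteq> (\<Union>c\<in>C \<inter> Rn n. clus (c div 4))"
  proof
    fix p assume p: "p \<in> U \<inter> Rn n"
    then obtain c where c: "c \<in> C" "p div 4 = c div 4" using inU by blast
    have "p < 4 * n" using p by (simp add: Rn_def)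
    then have "p div 4 < n" by (simp add: div_less_iff_less_mult)
    then have "c div 4 < n" using c by simp
    then have "c < 4 * n" by (simp add: div_less_iff_less_mult)
    then have "c \<in> C \<inter> Rn n" using c by (simp add: Rn_def)
    moreover have "p \<in> clus (c div 4)" using c(2) by (auto simp: clus_def)
    ultimately show "p \<in> (\<Union>c\<in>C \<inter> Rn n. clus (c div 4))" by blast
  qed
  have sub2: "U \<inter> (Pn n - Rn n) \<subseteq> (\<Union>c\<in>C - Rn n. clus (c div 4))"
  proof
    fix p assume p: "p \<in> U \<inter> (Pn n - Rn n)"
    then obtain c where c: "c \<in> C" "p div 4 = c div 4" using inU by blast
    have "\<not> p < 4 * n" using p by (simp add: Rn_def Pn_def)
    then have "\<not> p div 4 < n" by (simp add: div_less_iff_less_mult)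
    then have "\<not> c div 4 < n" using c by simp
    then have "\<not> c < 4 * n" by (simp add: div_less_iff_less_mult)
    then have "c \<in> C - Rn n" using c by (simp add: Rn_def)
    moreover have "p \<in> clus (c div 4)" using c(2) by (auto simp: clus_def)
    ultimately show "p \<in> (\<Union>c\<in>C - Rn n. clus (c div 4))" by blast
  qed
  have fin_UN: "finite (\<Union>c\<in>A. clus (c div 4))" if "finite A" for A
    using that by (simp add: clus_def)
  have b1: "card (U \<inter> Rn n) \<le> 4 * card (C \<inter> Rn n)"
  proof -
    have "card (U \<inter> Rn n) \<le> card (\<Union>c\<in>C \<inter> Rn n. clus (c div 4))"
      by (rule card_mono[OF fin_UN sub1]) (use fC in auto)
    also have "\<dots> \<le> (\<Sum>c\<in>C \<inter> Rn n. card (clus (c div 4)))" by (rule card_UN_le) (use fC in auto)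
    also have "\<dots> = 4 * card (C \<inter> Rn n)" by (simp add: card_clus)
    finally show ?thesis .
  qed
  have b2: "card (U \<inter> (Pn n - Rn n)) \<le> 4 * card (C - Rn n)"
  proof -
    have "card (U \<inter> (Pn n - Rn n)) \<le> card (\<Union>c\<in>C - Rn n. clus (c div 4))"
      by (rule card_mono[OF fin_UN sub2]) (use fC in auto)
    also have "\<dots> \<le> (\<Sum>c\<in>C - Rn n. card (clus (c div 4)))" by (rule card_UN_le) (use fC in auto)
    also have "\<dots> = 4 * card (C - Rn n)" by (simp add: card_clus)
    finally show ?thesis .
  qed
  have sum: "card (C \<inter> Rn n) + card (C - Rn n) = card C"
    using card_Int_Diff[OF fC, of "Rn n"] by simp
  from b1 b2 cr cb sum cC odd show False by presburger
qed

lemma qform: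
  assumes fT: "finite T" and fI: "\<And>I. I \<in> T \<Longrightarrow> finite I"
  shows "(\<Sum>I\<in>T. \<Sum>J\<in>T. v I * pe V0 K (\<lambda>X. valI n (I \<union> J) X * h X) * v J) =
     pe V0 K (\<lambda>X. (\<Sum>I\<in>T. v I * valI n I X) * (\<Sum>J\<in>T. v J * valI n J X) * h X)"
proof -
  have "pe V0 K (\<lambda>X. (\<Sum>I\<in>T. v I * valI n I X) * (\<Sum>J\<in>T. v J * valI n J X) * h X)
      = pe V0 K (\<lambda>X. \<Sum>I\<in>T. \<Sum>J\<in>T. v I * v J * (valI n (I \<union> J) X * h X))"
  proof (rule pe_cong)
    fix X
    have "(\<Sum>I\<in>T. v I * valI n I X) * (\<Sum>J\<in>T. v J * valI n J X) * h X =
        (\<Sum>I\<in>T. \<Sum>J\<in>T. (v I * valI n I X) * (v J * valI n J X)) * h X"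
      by (simp only: sum_product)
    also have "\<dots> = (\<Sum>I\<in>T. \<Sum>J\<in>T. (v I * valI n I X) * (v J * valI n J X) * h X)"
      by (simp only: sum_distrib_right)
    also have "\<dots> = (\<Sum>I\<in>T. \<Sum>J\<in>T. v I * v J * (valI n (I \<union> J) X * h X))"
      by (intro sum.cong refl) (simp add: valI_union fI algebra_simps)
    finally show "(\<Sum>I\<in>T. v I * valI n I X) * (\<Sum>J\<in>T. v J * valI n J X) * h X =
        (\<Sum>I\<in>T. \<Sum>J\<in>T. v I * v J * (valI n (I \<union> J) X * h X))" .
  qed
  also have "\<dots> = (\<Sum>I\<in>T. \<Sum>J\<in>T. v I * v J * pe V0 K (\<lambda>X. valI n (I \<union> J) X * h X))"
    by (simp only: pe_sum pe_smult)
  finally show ?thesis by (simp add: algebra_simps)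
qed

lemma valI_insert_fun: "finite L \<Longrightarrow> valI n (insert w L) = (\<lambda>X. val n w X * valI n L X)"
  by (rule ext) (simp add: valI_insert)

lemma valI_empty_fun: "valI n {} = (\<lambda>X. 1)"
  by (rule ext) (simp add: valI_def)

lemma lin_star_eq:
  assumes fV: "finite V" and fL: "finite L"
  shows "lin_star V g (\<lambda>I. pe V0 K (valI n I)) L =
     pe V0 K (\<lambda>X. valI n L X * (fst g + (\<Sum>w\<in>V. snd g w * val n w X)))"
proof -
  have "pe V0 K (\<lambda>X. valI n L X * (fst g + (\<Sum>w\<in>V. snd g w * val n w X)))
      = pe V0 K (\<lambda>X. fst g * valI n L X + (\<Sum>w\<in>V. snd g w * (val n w X * valI n L X)))"
    by (rule pe_cong) (simp add: algebra_simps sum_distrib_left sum_distrib_right)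
  also have "\<dots> = fst g * pe V0 K (valI n L) + (\<Sum>w\<in>V. snd g w * pe V0 K (\<lambda>X. val n w X * valI n L X))"
    by (simp only: pe_add pe_smult pe_sum)
  also have "\<dots> = lin_star V g (\<lambda>I. pe V0 K (valI n I)) L"
    unfolding lin_star_def using fL by (simp add: valI_insert_fun)
  finally show ?thesis by simp
qed

lemma finite_subsets_upto: "finite V \<Longrightarrow> finite (subsets_upto V t)"
  unfolding subsets_upto_def by simp

lemma mem_subsets_upto: "finite V \<Longrightarrow> I \<in> subsets_upto V t \<Longrightarrow> finite I \<and> I \<subseteq> V \<and> card I \<le> t"
  unfolding subsets_upto_def using finite_subset by auto

lemma ld_F:
  assumes "finite V" "finite T" "\<And>I. I \<in> T \<Longrightarrow> finite I \<and> card I \<le> t"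
  shows "lowdeg {..<n} t (\<lambda>X. \<Sum>I\<in>T. v I * valI n I X)"
proof (rule ld_sum[OF assms(2)])
  fix I assume "I \<in> T"
  then show "lowdeg {..<n} t (\<lambda>X. v I * valI n I X)"
    using assms(3) by (intro ld_smult ld_le[OF ld_valI]) auto
qed

lemma sos_lift_exists:
  assumes odd: "odd n" and n0: "0 < n" and t1: "1 \<le> t" and tn: "real t \<le> 1 / 4 * real n"
  shows "in_sos_lift (lp_vars (Pn n)) (lp1_constraints (Pn n) (dd D) (Rn n) n (2 * n) (2 * n)) t
           (\<lambda>I. pe {..<n} (real n / 2) (valI n I))"
proof -
  define V where "V = lp_vars (Pn n)"
  define K where "K = real n / 2"
  have fV: "finite V" unfolding V_def lp_vars_def Pn_def by simp
  have t4: "4 * t \<le> n" using tn by linarith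
  have A: "pe {..<n} K (valI n {}) = 1"
    unfolding valI_empty_fun by (rule pe_one) simp
  have B: "\<forall>I\<in>subsets_upto V (2 * t). 0 \<le> pe {..<n} K (valI n I) \<and> pe {..<n} K (valI n I) \<le> 1"
  proof
    fix I assume "I \<in> subsets_upto V (2 * t)"
    then have "finite I" "card I \<le> 2 * t" using mem_subsets_upto[OF fV] by auto
    moreover have "4 * card I \<le> 2 * n" using \<open>card I \<le> 2 * t\<close> t4 by linarith
    ultimately show "0 \<le> pe {..<n} K (valI n I) \<and> pe {..<n} K (valI n I) \<le> 1"
      unfolding K_def by (intro y_box)
  qed
  have C: "psd_on (subsets_upto V t) (\<lambda>I J. pe {..<n} K (valI n (I \<union> J)))"
    unfolding psd_on_def
  proof (intro conjI ballI allI)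
    fix I J show "pe {..<n} K (valI n (I \<union> J)) = pe {..<n} K (valI n (J \<union> I))" by (simp add: Un_commute)
  next
    fix v :: "var set \<Rightarrow> real"
    define T where "T = subsets_upto V t"
    have fT: "finite T" unfolding T_def by (rule finite_subsets_upto[OF fV])
    have mT: "\<And>I. I \<in> T \<Longrightarrow> finite I \<and> card I \<le> t" unfolding T_def using mem_subsets_upto[OF fV] by blast
    define F where "F = (\<lambda>X. \<Sum>I\<in>T. v I * valI n I X)"
    have "(\<Sum>I\<in>T. \<Sum>J\<in>T. v I * pe {..<n} K (valI n (I \<union> J)) * v J)
        = (\<Sum>I\<in>T. \<Sum>J\<in>T. v I * pe {..<n} K (\<lambda>X. valI n (I \<union> J) X * 1) * v J)" by simp
    also have "\<dots> = pe {..<n} K (\<lambda>X. F X * F X * 1)"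
      unfolding F_def by (rule qform[OF fT]) (use mT in blast)
    also have "\<dots> \<ge> 0"
    proof -
      have "0 \<le> pe {..<n} K (\<lambda>X. F X * F X)"
      proof (rule grig[rule_format])
        show "finite {..<n}" by simp
        show "2 * t \<le> card {..<n}" using t4 by simp
        show "real t - 1 \<le> K" unfolding K_def using t4 by linarith
        show "K \<le> real (card {..<n}) - real t + 1" unfolding K_def using t4 by simp
        show "lowdeg {..<n} t F" unfolding F_def by (rule ld_F[OF fV fT mT])
      qed
      then show ?thesis by simp
    qed
    finally show "0 \<le> (\<Sum>I\<in>subsets_upto V t. \<Sum>J\<in>subsets_upto V t. v I * pe {..<n} K (valI n (I \<union> J)) * v J)"
      unfolding T_def .
  qed
  have Dg: "psd_on (subsets_upto V (t - 1)) (\<lambda>I J. lin_star V g (\<lambda>I. pe {..<n} K (valI n I)) (I \<union> J))"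
    if g: "g \<in> lp1_constraints (Pn n) (dd D) (Rn n) n (2 * n) (2 * n)" for g
    unfolding psd_on_def
  proof (intro conjI ballI allI)
    fix I J show "lin_star V g (\<lambda>I. pe {..<n} K (valI n I)) (I \<union> J) = lin_star V g (\<lambda>I. pe {..<n} K (valI n I)) (J \<union> I)"
      by (simp add: Un_commute)
  next
    fix v :: "var set \<Rightarrow> real"
    define T where "T = subsets_upto V (t - 1)"
    have fT: "finite T" unfolding T_def by (rule finite_subsets_upto[OF fV])
    have mT: "\<And>I. I \<in> T \<Longrightarrow> finite I \<and> card I \<le> t - 1" unfolding T_def using mem_subsets_upto[OF fV] by blast
    define F where "F = (\<lambda>X. \<Sum>I\<in>T. v I * valI n I X)"
    define h where "h = (\<lambda>X. fst g + (\<Sum>w\<in>V. snd g w * val n w X))"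
    obtain \<kappa> where kap: "\<And>X. X \<subseteq> {..<n} \<Longrightarrow> h X = \<kappa> * (real (card X) - real n / 2)"
      using gv[OF g] unfolding h_def V_def by blast
    have "(\<Sum>I\<in>T. \<Sum>J\<in>T. v I * lin_star V g (\<lambda>I. pe {..<n} K (valI n I)) (I \<union> J) * v J)
        = (\<Sum>I\<in>T. \<Sum>J\<in>T. v I * pe {..<n} K (\<lambda>X. valI n (I \<union> J) X * h X) * v J)"
      unfolding h_def using mT by (intro sum.cong refl) (simp add: lin_star_eq[OF fV])
    also have "\<dots> = pe {..<n} K (\<lambda>X. F X * F X * h X)"
      unfolding F_def by (rule qform[OF fT]) (use mT in blast)
    also have "\<dots> = pe {..<n} K (\<lambda>X. \<kappa> * ((real (card X) - K) * (F X * F X)))"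
      by (rule pe_cong) (simp add: kap K_def)
    also have "\<dots> = \<kappa> * pe {..<n} K (\<lambda>X. (real (card X) - K) * (F X * F X))" by (rule pe_smult)
    also have "pe {..<n} K (\<lambda>X. (real (card X) - K) * (F X * F X)) = 0"
    proof (rule pe_ideal)
      show "finite {..<n}" by simp
      have lF: "lowdeg {..<n} (t - 1) F" unfolding F_def by (rule ld_F[OF fV fT mT])
      show "lowdeg {..<n} ((t - 1) + (t - 1)) (\<lambda>X. F X * F X)" by (rule ld_mult[OF lF lF])
      show "(t - 1) + (t - 1) < card {..<n}" using t4 t1 by simp
    qed
    finally show "0 \<le> (\<Sum>I\<in>subsets_upto V (t - 1). \<Sum>J\<in>subsets_upto V (t - 1).
        v I * lin_star V g (\<lambda>I. pe {..<n} K (valI n I)) (I \<union> J) * v J)"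
      unfolding T_def by simp
  qed
  show ?thesis unfolding in_sos_lift_def V_def[symmetric] K_def[symmetric]
    using A B C Dg by blast
qed

theorem theorem5:
  shows "\<exists>c::real > 0. \<forall>(n::nat) (D::real). odd n \<and> 0 < n \<and> 1 < D \<longrightarrow>
    (\<exists>(P::nat set) (d::nat \<Rightarrow> nat \<Rightarrow> real) (R::nat set).
       finite P \<and> card P = 8 * n \<and> metric_on P d \<and> R \<subseteq> P \<and>
       (\<forall>\<rho> C. colorful_solution P d R n (2 * n) (2 * n) \<rho> C \<longrightarrow> D \<le> \<rho>) \<and>
       (\<forall>t::nat. 1 \<le> t \<and> real t \<le> c * real n \<longrightarrow>
          (\<exists>y. in_sos_lift (lp_vars P) (lp1_constraints P d R n (2 * n) (2 * n)) t y)))"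
proof (intro exI[of _ "1 / 4 :: real"] conjI allI impI)
  show "(0::real) < 1 / 4" by simp
  fix n :: nat and D :: real
  assume a: "odd n \<and> 0 < n \<and> 1 < D"
  show "\<exists>(P::nat set) (d::nat \<Rightarrow> nat \<Rightarrow> real) (R::nat set).
       finite P \<and> card P = 8 * n \<and> metric_on P d \<and> R \<subseteq> P \<and>
       (\<forall>\<rho> C. colorful_solution P d R n (2 * n) (2 * n) \<rho> C \<longrightarrow> D \<le> \<rho>) \<and>
       (\<forall>t::nat. 1 \<le> t \<and> real t \<le> 1 / 4 * real n \<longrightarrow>
          (\<exists>y. in_sos_lift (lp_vars P) (lp1_constraints P d R n (2 * n) (2 * n)) t y))"
  proof -
  have h1: "finite (Pn n)" by (simp add: Pn_def)
  have h2: "card (Pn n) = 8 * n" by (simp add: Pn_def)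
  have h3: "metric_on (Pn n) (dd D)" by (rule metric_dd)
  have h4: "Rn n \<subseteq> Pn n" by (auto simp: Rn_def Pn_def)
  have h5: "\<forall>\<rho> C. colorful_solution (Pn n) (dd D) (Rn n) n (2 * n) (2 * n) \<rho> C \<longrightarrow> D \<le> \<rho>"
    using infeas a by blast
  have h6: "\<forall>t::nat. 1 \<le> t \<and> real t \<le> 1 / 4 * real n \<longrightarrow>
     (\<exists>y. in_sos_lift (lp_vars (Pn n)) (lp1_constraints (Pn n) (dd D) (Rn n) n (2 * n) (2 * n)) t y)"
    using sos_lift_exists a by blast
  show ?thesis using h1 h2 h3 h4 h5 h6 by blast
  qed
qed


end
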